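(* Let $\mu$ be a positive Radon measure on $\mathbb{R}^d$ satisfying the growth condition with constants $C_0>0$, $n\in(0,d]$, and let $1 \le q \le p<\infty$. There is a constant $C>0$ such that for every $f \in \mathcal{C}^p_q(\mu)$ satisfying $M(f)=\lim_{Q \in \mathcal{Q}(\mu,2)}m_Q(f)=0$, \[ C^{-1}\,\| f \, : \, \mathcal{C}^p_q(\mu)\| \le \| f \, : \, \mathcal{M}^p_q(\mu) \| \le C\,\| f \, : \, \mathcal{C}^p_q(\mu)\|. \]
   Context: Growth condition: $\mu(Q(x,l)) \le C_0\,l^n$ for all $x \in \operatorname{supp}(\mu)$ and $l>0$. Cubes are closed with sides parallel to the axes; $Q(x,l)$ is the cube centered at $x$ of side length $l$; $z_Q$, $\ell(Q)$ are center and side length; $\rho Q$ is concentric with $Q$ of side length $\rho\ell(Q)$. $\mathcal{Q}(\mu)$ is the set of cubes of positive $\mu$-measure (including $\mathbb{R}^d$ if $\mu$ is finite). $Q\in\mathcal{Q}(\mu)$ is doubling if $\mu(2Q)\le 2^{d+1}\mu(Q)$; $\mathcal{Q}(\mu,2)$ is the set of doubling cubes, directed by inclusion. For $Q\in\mathcal{Q}(\mu)$, $Q^*$ is the smallest doubling cube of the form $2^jQ$, $j\ge 0$. For $Q\subset R$, $Q\in\mathcal{Q}(\mu)$, let $Q_R$ be the smallest cube concentric with $Q$ containing $R$, $\delta(Q,R):=\int_{\ell(Q)}^{\ell(Q_R)} \mu(Q(z_Q,l))\,l^{-n}\,\frac{dl}{l}$ and $K_{Q,R}:=1+\delta(Q,R)$.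 $m_Q(f):=\mu(Q)^{-1}\int_Q f\,d\mu$. The statement $\lim_{Q \in \mathcal{Q}(\mu,2)}m_Q(f)=0$ means: for every $\varepsilon>0$ there is $Q\in\mathcal{Q}(\mu,2)$ with $|m_R(f)|\le\varepsilon$ for all $R\in\mathcal{Q}(\mu,2)$ with $R\supset Q$. Norms: \[ \|f : \mathcal{C}^p_q(\mu)\| := \sup_{Q \in \mathcal{Q}(\mu)} \mu(2Q)^{\frac{1}{p}-\frac{1}{q}} \Big(\int_Q|f(x)-m_{Q^*}(f)|^q\,d\mu(x)\Big)^{\frac{1}{q}} + \sup_{Q \subset R,\ Q,R \in \mathcal{Q}(\mu,2)} \mu(Q)^{\frac{1}{p}} \frac{|m_Q(f)-m_R(f)|}{K_{Q,R}}, \] $\mathcal{C}^p_q(\mu)$ being the set of $f\in L^1_{loc}(\mu)$ where this is finite, and \[ \| f : \mathcal{M}^p_q(\mu)\| := \sup_{Q \in \mathcal{Q}(\mu)} \mu(2Q)^{\frac{1}{p}-\frac{1}{q}} \Big(\int_Q|f|^q\,d\mu\Big)^{\frac{1}{q}}. \] *)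

theory Defs
  imports "HOL-Analysis.Analysis"
begin

definition cube :: "'a::euclidean_space \<Rightarrow> real \<Rightarrow> 'a set" where
  "cube z l = cbox (z - (l/2) *\<^sub>R One) (z + (l/2) *\<^sub>R One)"

definition is_cube :: "'a::euclidean_space set \<Rightarrow> bool" where
  "is_cube Q \<longleftrightarrow> (\<exists>z l. l > 0 \<and> Q = cube z l)"

text \<open>Center and side length of a (genuine) cube; they are uniquely determined.\<close>
definition cube_center :: "'a::euclidean_space set \<Rightarrow> 'a" where
  "cube_center Q = (SOME z. \<exists>l>0. Q = cube z l)"

definition cube_side :: "'a::euclidean_space set \<Rightarrow> real" where
  "cube_side Q = (SOME l. l > 0 \<and> (\<exists>z. Q = cube z l))"

text \<open>The concentric dilate \<open>\<rho>Q\<close>; the whole space (which may belong to the family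
  of cubes) is its own dilate.\<close>
definition dil :: "real \<Rightarrow> 'a::euclidean_space set \<Rightarrow> 'a set" where
  "dil \<rho> Q = (if Q = UNIV then UNIV else cube (cube_center Q) (\<rho> * cube_side Q))"

definition radon_measure :: "'a::euclidean_space measure \<Rightarrow> bool" where
  "radon_measure mu \<longleftrightarrow> sets mu = sets borel \<and> (\<forall>K. compact K \<longrightarrow> emeasure mu K < \<infinity>)"

definition msupp :: "'a::euclidean_space measure \<Rightarrow> 'a set" where
  "msupp mu = {x. \<forall>e>0. emeasure mu (ball x e) > 0}"

definition growth :: "'a::euclidean_space measure \<Rightarrow> real \<Rightarrow> real \<Rightarrow> bool" where
  "growth mu C0 n \<longleftrightarrow>
     (\<forall>x\<in>msupp mu. \<forall>l>0. emeasure mu (cube x l) \<le> ennreal (C0 * l powr n))"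

definition Qcubes :: "'a::euclidean_space measure \<Rightarrow> 'a set set" where
  "Qcubes mu = {Q. is_cube Q \<and> emeasure mu Q > 0}
      \<union> {Q. Q = UNIV \<and> 0 < emeasure mu UNIV \<and> emeasure mu UNIV < \<infinity>}"

definition doubling :: "'a::euclidean_space measure \<Rightarrow> 'a set \<Rightarrow> bool" where
  "doubling mu Q \<longleftrightarrow> Q \<in> Qcubes mu \<and>
     emeasure mu (dil 2 Q) \<le> 2 ^ (DIM('a) + 1) * emeasure mu Q"

definition Qdoubling :: "'a::euclidean_space measure \<Rightarrow> 'a set set" where
  "Qdoubling mu = {Q. doubling mu Q}"

definition star :: "'a::euclidean_space measure \<Rightarrow> 'a set \<Rightarrow> 'a set" where
  "star mu Q = dil (2 ^ (LEAST j::nat. doubling mu (dil (2 ^ j) Q))) Q"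

text \<open>\<open>\<delta>(Q,R) = \<integral>_{\<ell>(Q)}^{\<ell>(Q_R)} \<mu>(Q(z_Q,l)) l^{-n} dl/l\<close>.  The interval
  \<open>[\<ell>(Q), \<ell>(Q_R))\<close> is exactly the set of \<open>l \<ge> \<ell>(Q)\<close> for which the concentric cube
  of side \<open>l\<close> does not contain \<open>R\<close> (for \<open>R = \<real>\<^sup>d\<close> this is \<open>[\<ell>(Q),\<infinity>)\<close>).\<close>
definition delta :: "'a::euclidean_space measure \<Rightarrow> real \<Rightarrow> 'a set \<Rightarrow> 'a set \<Rightarrow> ennreal" where
  "delta mu n Q R = (if Q = UNIV then 0 else
     (\<integral>\<^sup>+ l. indicator {l. cube_side Q \<le> l \<and> \<not> R \<subseteq> cube (cube_center Q) l} l *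
        emeasure mu (cube (cube_center Q) l) * ennreal (l powr (- n) / l) \<partial>lborel))"

definition Kcoef :: "'a::euclidean_space measure \<Rightarrow> real \<Rightarrow> 'a set \<Rightarrow> 'a set \<Rightarrow> ennreal" where
  "Kcoef mu n Q R = 1 + delta mu n Q R"

definition mean :: "'a::euclidean_space measure \<Rightarrow> 'a set \<Rightarrow> ('a \<Rightarrow> real) \<Rightarrow> real" where
  "mean mu Q f = (\<integral>x\<in>Q. f x \<partial>mu) / measure mu Q"

definition L1_loc :: "'a::euclidean_space measure \<Rightarrow> ('a \<Rightarrow> real) \<Rightarrow> bool" where
  "L1_loc mu f \<longleftrightarrow> f \<in> borel_measurable mu \<and> (\<forall>K. compact K \<longrightarrow> set_integrable mu K f)"

definition enn_powr :: "ennreal \<Rightarrow> real \<Rightarrow> ennreal" where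
  "enn_powr I a = (if I = \<infinity> then \<infinity> else ennreal (enn2real I powr a))"

definition normC :: "'a::euclidean_space measure \<Rightarrow> real \<Rightarrow> real \<Rightarrow> real \<Rightarrow> ('a \<Rightarrow> real) \<Rightarrow> ennreal" where
  "normC mu n p q f =
     (SUP Q\<in>Qcubes mu. ennreal (measure mu (dil 2 Q) powr (1/p - 1/q)) *
        enn_powr (\<integral>\<^sup>+ x\<in>Q. ennreal (\<bar>f x - mean mu (star mu Q) f\<bar> powr q) \<partial>mu) (1/q))
   + (SUP (Q, R)\<in>{(Q, R). Q \<in> Qdoubling mu \<and> R \<in> Qdoubling mu \<and> Q \<subseteq> R}.
        ennreal (measure mu Q powr (1/p) * \<bar>mean mu Q f - mean mu R f\<bar>) / Kcoef mu n Q R)"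

definition in_C :: "'a::euclidean_space measure \<Rightarrow> real \<Rightarrow> real \<Rightarrow> real \<Rightarrow> ('a \<Rightarrow> real) \<Rightarrow> bool" where
  "in_C mu n p q f \<longleftrightarrow> L1_loc mu f \<and> normC mu n p q f < \<infinity>"

definition normM :: "'a::euclidean_space measure \<Rightarrow> real \<Rightarrow> real \<Rightarrow> ('a \<Rightarrow> real) \<Rightarrow> ennreal" where
  "normM mu p q f =
     (SUP Q\<in>Qcubes mu. ennreal (measure mu (dil 2 Q) powr (1/p - 1/q)) *
        enn_powr (\<integral>\<^sup>+ x\<in>Q. ennreal (\<bar>f x\<bar> powr q) \<partial>mu) (1/q))"

text \<open>\<open>lim_{Q \<in> \<Q>(\<mu>,2)} m_Q(f) = 0\<close> along the family directed by inclusion.\<close>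
definition mean_lim_zero :: "'a::euclidean_space measure \<Rightarrow> ('a \<Rightarrow> real) \<Rightarrow> bool" where
  "mean_lim_zero mu f \<longleftrightarrow>
     (\<forall>\<epsilon>>0. \<exists>Q\<in>Qdoubling mu. \<forall>R\<in>Qdoubling mu. Q \<subseteq> R \<longrightarrow> \<bar>mean mu R f\<bar> \<le> \<epsilon>)"

end

theory Submission
  imports Defs
begin

lemma aux_abs: "((c::real) - l/2 \<le> a \<and> a \<le> c + l/2) \<longleftrightarrow> \<bar>a - c\<bar> \<le> l/2" by arith

lemma mem_cube: "y \<in> cube z l \<longleftrightarrow> (\<forall>i\<in>Basis. \<bar>y \<bullet> i - z \<bullet> i\<bar> \<le> l/2)"
  unfolding cube_def mem_box by (simp add: inner_simps aux_abs)

lemma cube_mono: "l \<le> l' \<Longrightarrow> cube z l \<subseteq> cube z l'"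
  by (auto simp: mem_cube) (smt (verit, ccfv_SIG) field_sum_of_halves)

lemma cube_in_cube: "x \<in> cube u s \<Longrightarrow> cube u s \<subseteq> cube x (2 * s)"
  by (auto simp: mem_cube) (smt (verit, ccfv_SIG) )

lemma compact_cube[simp]: "compact (cube z l)" by (simp add: cube_def)
lemma bounded_cube[simp]: "bounded (cube z l)" by (simp add: compact_imp_bounded)
lemma cube_ne_UNIV[simp]: "cube z l \<noteq> UNIV" by (metis bounded_cube not_bounded_UNIV)
lemma center_in_cube: "0 \<le> l \<Longrightarrow> z \<in> cube z l" by (auto simp: mem_cube)

lemma cube_eq: assumes "0 < l" "0 < l'" "cube z l = cube z' l'" shows "z = z' \<and> l = l'"
proof -
  have ne: "cube z l \<noteq> {}" using center_in_cube[of l z] assms by auto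
  have e: "z - (l/2) *\<^sub>R One = z' - (l'/2) *\<^sub>R One" "z + (l/2) *\<^sub>R One = z' + (l'/2) *\<^sub>R One"
    using assms(3) ne unfolding cube_def eq_cbox by auto
  have "(z - (l/2) *\<^sub>R One) + (z + (l/2) *\<^sub>R One) = (z' - (l'/2) *\<^sub>R One) + (z' + (l'/2) *\<^sub>R One)"
    using e by simp
  hence zz: "z = z'" by (simp add: algebra_simps scaleR_2 flip: scaleR_2)
  obtain i :: 'a where i: "i \<in> Basis" using nonempty_Basis by blast
  have "(z + (l/2) *\<^sub>R One) \<bullet> i = (z' + (l'/2) *\<^sub>R One) \<bullet> i" using e by simp
  hence "l = l'" using zz i by (simp add: inner_simps)
  thus ?thesis using zz by simp
qed

lemma is_cube_cube: "0 < l \<Longrightarrow> is_cube (cube z l)" by (auto simp: is_cube_def)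

lemma center_cube[simp]: "0 < l \<Longrightarrow> cube_center (cube z l) = z"
  unfolding cube_center_def by (rule some_equality) (auto dest: cube_eq)

lemma side_cube[simp]: "0 < l \<Longrightarrow> cube_side (cube z l) = l"
  unfolding cube_side_def by (rule some_equality) (auto dest: cube_eq)

lemma is_cubeE: assumes "is_cube Q" obtains z l where "0 < l" "Q = cube z l"
  using assms by (auto simp: is_cube_def)

lemma dil_cube[simp]: "0 < l \<Longrightarrow> dil r (cube z l) = cube z (r * l)"
  by (simp add: dil_def)

lemma dil_UNIV[simp]: "dil r UNIV = UNIV" by (simp add: dil_def)

lemma bounded_in_cube: assumes "bounded S" obtains M where "M > 0" "S \<subseteq> cube z M"
proof -
  obtain r where r: "r > 0" "\<forall>x\<in>S. norm x \<le> r" using assms bounded_pos by blast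
  have "S \<subseteq> cube z (2 * (r + norm z))"
  proof
    fix x assume "x \<in> S"
    hence nx: "norm x \<le> r" using r by auto
    show "x \<in> cube z (2 * (r + norm z))" unfolding mem_cube
    proof
      fix i :: 'a assume i: "i \<in> Basis"
      have "\<bar>x \<bullet> i - z \<bullet> i\<bar> \<le> \<bar>x \<bullet> i\<bar> + \<bar>z \<bullet> i\<bar>" by linarith
      also have "\<dots> \<le> norm x + norm z" using Basis_le_norm[OF i] by (simp add: add_mono)
      finally show "\<bar>x \<bullet> i - z \<bullet> i\<bar> \<le> 2 * (r + norm z)/2" using nx by simp
    qed
  qed
  moreover have "0 < 2 * (r + norm z)" using r by (simp add: add_pos_nonneg)
  ultimately show ?thesis using that by blast
qed

lemma ennreal_pow2: "(2::ennreal)^k = ennreal (2^k)"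
  by (metis ennreal_numeral ennreal_power zero_le_numeral)

locale setting =
  fixes mu :: "'a::euclidean_space measure" and C0 n :: real
  assumes radon: "radon_measure mu" and C0: "C0 > 0" and npos: "0 < n"
    and nd: "n \<le> real DIM('a)" and gr: "growth mu C0 n"
begin

lemma sets_mu[simp]: "sets mu = sets borel" using radon by (simp add: radon_measure_def)
lemma space_mu[simp]: "space mu = UNIV" using sets_mu sets_eq_imp_space_eq by fastforce
lemma borel_mu[measurable]: "A \<in> sets borel \<Longrightarrow> A \<in> sets mu" by simp
lemma cube_borel[simp, measurable]: "cube z l \<in> sets borel"
  by (rule borel_closed) (simp add: compact_imp_closed)
lemma cube_sets[simp, measurable]: "cube z l \<in> sets mu" by simp
lemma ball_sets[simp]: "ball z l \<in> sets mu" by simp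
lemma fin_compact: "compact K \<Longrightarrow> emeasure mu K < \<infinity>" using radon by (simp add: radon_measure_def)
lemma fin_cube: "emeasure mu (cube z l) < \<infinity>" by (rule fin_compact) simp
lemma em_cube: "emeasure mu (cube z l) = ennreal (measure mu (cube z l))"
  using fin_cube[of z l] by (intro emeasure_eq_ennreal_measure) auto
lemma fm_cube: "cube z l \<in> fmeasurable mu" by (intro fmeasurableI cube_sets fin_cube)
lemma meas_le_cube: "A \<in> sets mu \<Longrightarrow> A \<subseteq> cube z l \<Longrightarrow> measure mu A \<le> measure mu (cube z l)"
  by (rule measure_mono_fmeasurable[OF _ _ fm_cube])
lemma meas_cube_mono: "l \<le> l' \<Longrightarrow> measure mu (cube z l) \<le> measure mu (cube z l')"
  by (rule meas_le_cube[OF cube_sets cube_mono])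

lemma supp_hit: assumes "compact K" "0 < emeasure mu K" shows "\<exists>x\<in>K. x \<in> msupp mu"
proof (rule ccontr)
  assume "\<not> ?thesis"
  hence "\<forall>x\<in>K. \<exists>e>0. emeasure mu (ball x e) = 0" by (auto simp: msupp_def not_less)
  then obtain r where r: "\<forall>x\<in>K. r x > 0 \<and> emeasure mu (ball x (r x)) = 0" by metis
  have cov: "K \<subseteq> (\<Union>x\<in>K. ball x (r x))" using r by auto
  obtain D where D: "D \<subseteq> K" "finite D" "K \<subseteq> (\<Union>x\<in>D. ball x (r x))"
    using compactE_image[OF assms(1), of K "\<lambda>x. ball x (r x)"] cov by auto
  have "emeasure mu K \<le> emeasure mu (\<Union>x\<in>D. ball x (r x))"
    by (rule emeasure_mono) (use D in auto)
  also have "\<dots> \<le> (\<Sum>x\<in>D. emeasure mu (ball x (r x)))"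
    by (rule emeasure_subadditive_finite) (use D in auto)
  also have "\<dots> = 0" using D r by (auto intro!: sum.neutral)
  finally show False using assms(2) by simp
qed

lemma growth_any: assumes "0 < l" shows "measure mu (cube w l) \<le> C0 * (2 * l) powr n"
proof -
  have "emeasure mu (cube w l) \<le> ennreal (C0 * (2 * l) powr n)"
  proof (cases "emeasure mu (cube w l) = 0")
    case True thus ?thesis by simp
  next
    case False
    then obtain x where x: "x \<in> cube w l" "x \<in> msupp mu"
      using supp_hit[of "cube w l"] by (auto simp: zero_less_iff_neq_zero)
    have "emeasure mu (cube w l) \<le> emeasure mu (cube x (2 * l))"
      by (rule emeasure_mono[OF cube_in_cube[OF x(1)]]) simp
    also have "\<dots> \<le> ennreal (C0 * (2 * l) powr n)" using gr x(2) assms by (auto simp: growth_def)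
    finally show ?thesis .
  qed
  thus ?thesis using C0 by (simp add: em_cube ennreal_le_iff)
qed

lemma Qcubes_cube: "0 < l \<Longrightarrow> cube z l \<in> Qcubes mu \<longleftrightarrow> 0 < measure mu (cube z l)"
  by (auto simp: Qcubes_def is_cube_cube em_cube)

lemma doubling_cube: "0 < l \<Longrightarrow> doubling mu (cube z l) \<longleftrightarrow>
   0 < measure mu (cube z l) \<and> measure mu (cube z (2 * l)) \<le> 2^(DIM('a)+1) * measure mu (cube z l)"
  by (auto simp: doubling_def Qcubes_cube em_cube ennreal_pow2 ennreal_mult[symmetric] ennreal_le_iff
       simp del: ennreal_numeral power_Suc)

lemma ex_doubling: assumes l: "0 < l" and m0: "0 < measure mu (cube z l)"
  shows "\<exists>k. doubling mu (cube z (2^k * l))"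
proof (rule ccontr)
  assume nd0: "\<not> ?thesis"
  define m where "m k = measure mu (cube z (2^k * l))" for k
  define d where "d = DIM('a)"
  have m0': "m 0 > 0" using m0 by (simp add: m_def)
  have mono: "m 0 \<le> m k" for k unfolding m_def using l
    by (intro meas_cube_mono) simp
  have step: "m (Suc k) > 2^(d+1) * m k" for k
  proof -
    have "\<not> doubling mu (cube z (2^k * l))" using nd0 by blast
    moreover have "0 < m k" using mono[of k] m0' by simp
    moreover have "cube z (2 * (2^k * l)) = cube z (2^Suc k * l)" by (simp add: mult.assoc)
    ultimately show ?thesis using l by (simp add: doubling_cube m_def d_def not_le)
  qed
  have lower: "m k \<ge> 2^((d+1)*k) * m 0" for k
  proof (induction k)
    case 0 show ?case by simp
  next
    case (Suc k)
    have "2^((d+1)*Suc k) * m 0 = 2^(d+1) * (2^((d+1)*k) * m 0)" by (simp add: power_add)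
    also have "\<dots> \<le> 2^(d+1) * m k" using Suc by (intro mult_left_mono) auto
    also have "\<dots> \<le> m (Suc k)" using step[of k] by simp
    finally show ?case .
  qed
  define A where "A = C0 * 2 powr n * l powr n"
  have upper: "m k \<le> A * 2^(d*k)" for k
  proof -
    have "m k \<le> C0 * (2 * (2^k * l)) powr n" unfolding m_def using l by (intro growth_any) simp
    also have "\<dots> = C0 * 2 powr n * l powr n * ((2^k) powr n)" using l
      by (simp add: powr_mult)
    also have "((2::real)^k) powr n \<le> (2^k) powr (real d)" using nd unfolding d_def
      by (intro powr_mono) auto
    also have "((2::real)^k) powr (real d) = 2^(d*k)" by (simp add: powr_realpow flip: power_mult)
    finally show ?thesis using C0 by (simp add: A_def mult_left_mono)
  qed
  have "2^k * m 0 \<le> A" for k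
  proof -
    have "2^(d*k) * (2^k * m 0) = 2^((d+1)*k) * m 0" by (simp add: power_add algebra_simps)
    also have "\<dots> \<le> A * 2^(d*k)" using lower[of k] upper[of k] by linarith
    finally show ?thesis by (simp add: mult.commute)
  qed
  moreover obtain k :: nat where "A / m 0 < real k" using reals_Archimedean2 by blast
  moreover have "real k < 2^k" using less_exp[of k] by (metis of_nat_less_iff of_nat_numeral of_nat_power)
  ultimately have "A / m 0 < 2^k" by linarith
  hence "A < 2^k * m 0" using m0' by (simp add: divide_less_eq)
  with \<open>2^k * m 0 \<le> A\<close> show False by linarith
qed

end

lemma powr_subadd:
  fixes x y s :: real
  assumes "0 \<le> x" "0 \<le> y" "0 < s" "s \<le> 1"
  shows "(x + y) powr s \<le> x powr s + y powr s"
proof (cases "x + y = 0")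
  case True
  hence "x = 0" "y = 0" using assms by auto
  thus ?thesis by simp
next
  case False
  hence xy: "x + y > 0" using assms by auto
  have eq: "z powr s = z * z powr (s - 1)" if "z > 0" for z :: real
  proof -
    show ?thesis using powr_add[of z "s - 1" 1] that by simp
  qed
  have h: "z * (x+y) powr (s-1) \<le> z powr s" if "0 \<le> z" "z \<le> x+y" for z
  proof (cases "z = 0")
    case True thus ?thesis using assms by simp
  next
    case False
    hence z: "z > 0" using that by auto
    have "(x+y) powr (s-1) \<le> z powr (s-1)" by (rule powr_mono2') (use z that assms in auto)
    hence "z * (x+y) powr (s-1) \<le> z * z powr (s-1)" using z by (simp add: mult_left_mono)
    also have "\<dots> = z powr s" using eq[OF z] by simp
    finally show ?thesis .
  qed
  have "(x + y) powr s = x * (x+y) powr (s-1) + y * (x+y) powr (s-1)"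
    using eq[OF xy] by (simp add: distrib_right)
  also have "\<dots> \<le> x powr s + y powr s" using h[of x] h[of y] assms by (intro add_mono) auto
  finally show ?thesis .
qed

lemma pow_tri:
  fixes u v q :: real
  assumes "0 \<le> q"
  shows "\<bar>u + v\<bar> powr q \<le> 2 powr q * (\<bar>u\<bar> powr q + \<bar>v\<bar> powr q)"
proof -
  have "\<bar>u+v\<bar> \<le> 2 * max \<bar>u\<bar> \<bar>v\<bar>" by auto
  hence "\<bar>u+v\<bar> powr q \<le> (2 * max \<bar>u\<bar> \<bar>v\<bar>) powr q" using assms by (intro powr_mono2) auto
  also have "\<dots> = 2 powr q * (max \<bar>u\<bar> \<bar>v\<bar>) powr q" by (simp add: powr_mult)
  also have "(max \<bar>u\<bar> \<bar>v\<bar>) powr q \<le> \<bar>u\<bar> powr q + \<bar>v\<bar> powr q"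
    by (cases "\<bar>u\<bar> \<le> \<bar>v\<bar>") (auto simp: max_def)
  finally show ?thesis by simp
qed

lemma young_pt:
  fixes t c q :: real
  assumes "0 \<le> t" "0 < c" "1 \<le> q"
  shows "t \<le> t powr q / (q * c powr (q - 1)) + c * (1 - 1/q)"
proof (cases "t = 0")
  case True thus ?thesis using assms by (simp add: divide_le_eq_1)
next
  case False
  hence t: "t > 0" using assms by auto
  have "((t/c) powr q) powr (1/q) * 1 powr (1 - 1/q) \<le> (1/q) * (t/c) powr q + (1 - 1/q) * 1"
    using t assms by (intro Youngs_inequality_0) (auto simp: divide_le_eq_1)
  moreover have "((t/c) powr q) powr (1/q) = t/c" using t assms by (simp add: powr_powr)
  ultimately have "t/c \<le> (1/q) * (t/c) powr q + (1 - 1/q)" by simp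
  hence "c * (t/c) \<le> c * ((1/q) * (t/c) powr q + (1 - 1/q))" using assms(2) by (intro mult_left_mono) auto
  moreover have "c * (t/c) = t" using assms by simp
  moreover have "c * ((1/q) * (t/c) powr q) = t powr q / (q * c powr (q - 1))"
  proof -
    have "c powr (q - 1) = c powr q / c" using assms by (simp add: powr_diff)
    thus ?thesis using t assms by (simp add: powr_divide field_simps)
  qed
  ultimately have "t \<le> c * ((1/q) * (t/c) powr q) + c * (1 - 1/q)" by (simp add: distrib_left)
  thus ?thesis using \<open>c * ((1/q) * (t/c) powr q) = t powr q / (q * c powr (q - 1))\<close> by simp
qed

lemma enn_powr_ennreal[simp]: "0 \<le> x \<Longrightarrow> enn_powr (ennreal x) a = ennreal (x powr a)"
  by (simp add: enn_powr_def)
lemma enn_powr_top[simp]: "enn_powr top a = top" by (simp add: enn_powr_def)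
lemma enn_powr_zero[simp]: "enn_powr 0 a = 0" by (simp add: enn_powr_def)

lemma enn_powr_mono: assumes "0 \<le> a" "I \<le> J" shows "enn_powr I a \<le> enn_powr J a"
proof (cases J rule: ennreal_cases)
  case (real j)
  then obtain i where i: "I = ennreal i" "0 \<le> i" using assms
    by (cases I rule: ennreal_cases) (auto simp: top_unique)
  have "i \<le> j" using assms(2) i real by (simp add: ennreal_le_iff)
  thus ?thesis using i real assms by (simp add: powr_mono2)
qed simp

lemma enn_powr_add: assumes "0 < a" "a \<le> 1"
  shows "enn_powr (I + J) a \<le> enn_powr I a + enn_powr J a"
proof (cases I rule: ennreal_cases)
  case (real i)
  show ?thesis
  proof (cases J rule: ennreal_cases)
    case (real j)
    thus ?thesis using \<open>I = ennreal i\<close> \<open>0 \<le> i\<close> assms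
      by (simp add: ennreal_plus[symmetric] powr_subadd del: ennreal_plus)
  qed simp
qed simp

lemma enn_powr_cmult: assumes "0 \<le> c" "0 < a"
  shows "enn_powr (ennreal c * I) a = ennreal (c powr a) * enn_powr I a"
proof (cases I rule: ennreal_cases)
  case (real i)
  thus ?thesis using assms by (simp add: ennreal_mult[symmetric] powr_mult)
next
  case top
  show ?thesis
  proof (cases "c = 0")
    case True thus ?thesis using top by simp
  next
    case False
    hence "c > 0" using assms by auto
    thus ?thesis using top by (simp add: ennreal_mult_top)
  qed
qed

lemma enn_powr_lt_top: "enn_powr I a < top \<longleftrightarrow> I < top"
  by (cases I rule: ennreal_cases) auto

context setting begin

lemma Lq_tri:
  assumes Q: "Q \<in> sets mu" and mQ: "emeasure mu Q = ennreal mQ" "0 \<le> mQ" and q: "1 \<le> q"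
    and g: "g \<in> borel_measurable mu"
  shows "enn_powr (\<integral>\<^sup>+x\<in>Q. ennreal (\<bar>g x + c\<bar> powr q) \<partial>mu) (1/q)
    \<le> 2 * (enn_powr (\<integral>\<^sup>+x\<in>Q. ennreal (\<bar>g x\<bar> powr q) \<partial>mu) (1/q) + ennreal (\<bar>c\<bar> * mQ powr (1/q)))"
proof -
  define I where "I = (\<integral>\<^sup>+x\<in>Q. ennreal (\<bar>g x\<bar> powr q) \<partial>mu)"
  have "(\<integral>\<^sup>+x\<in>Q. ennreal (\<bar>g x + c\<bar> powr q) \<partial>mu)
      \<le> (\<integral>\<^sup>+x. ennreal (2 powr q) * (ennreal (\<bar>g x\<bar> powr q) * indicator Q x)
            + ennreal (2 powr q) * (ennreal (\<bar>c\<bar> powr q) * indicator Q x) \<partial>mu)"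
  proof (intro nn_integral_mono)
    fix x
    have "\<bar>g x + c\<bar> powr q \<le> 2 powr q * \<bar>g x\<bar> powr q + 2 powr q * \<bar>c\<bar> powr q"
      using pow_tri[of q "g x" c] q by (simp add: distrib_left)
    hence "ennreal (\<bar>g x + c\<bar> powr q) \<le> ennreal (2 powr q) * ennreal (\<bar>g x\<bar> powr q)
       + ennreal (2 powr q) * ennreal (\<bar>c\<bar> powr q)"
      by (simp add: ennreal_mult[symmetric] ennreal_plus[symmetric] del: ennreal_plus)
    thus "ennreal (\<bar>g x + c\<bar> powr q) * indicator Q x
      \<le> ennreal (2 powr q) * (ennreal (\<bar>g x\<bar> powr q) * indicator Q x)
            + ennreal (2 powr q) * (ennreal (\<bar>c\<bar> powr q) * indicator Q x)"
      by (auto split: split_indicator)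
  qed
  also have "\<dots> = ennreal (2 powr q) * I + ennreal (2 powr q) * (ennreal (\<bar>c\<bar> powr q) * ennreal mQ)"
    using Q g unfolding I_def
    by (subst nn_integral_add) (auto simp: nn_integral_cmult nn_integral_cmult_indicator mQ)
  also have "\<dots> = ennreal (2 powr q) * (I + ennreal (\<bar>c\<bar> powr q * mQ))"
    using mQ by (simp add: distrib_left ennreal_mult)
  finally have le: "(\<integral>\<^sup>+x\<in>Q. ennreal (\<bar>g x + c\<bar> powr q) \<partial>mu) \<le> ennreal (2 powr q) * (I + ennreal (\<bar>c\<bar> powr q * mQ))" .
  have "enn_powr (\<integral>\<^sup>+x\<in>Q. ennreal (\<bar>g x + c\<bar> powr q) \<partial>mu) (1/q)
      \<le> enn_powr (ennreal (2 powr q) * (I + ennreal (\<bar>c\<bar> powr q * mQ))) (1/q)"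
    using q by (intro enn_powr_mono le) auto
  also have "\<dots> = ennreal 2 * enn_powr (I + ennreal (\<bar>c\<bar> powr q * mQ)) (1/q)"
    using q by (subst enn_powr_cmult) (auto simp: powr_powr)
  also have "\<dots> \<le> ennreal 2 * (enn_powr I (1/q) + enn_powr (ennreal (\<bar>c\<bar> powr q * mQ)) (1/q))"
    using q by (intro mult_left_mono enn_powr_add) auto
  also have "enn_powr (ennreal (\<bar>c\<bar> powr q * mQ)) (1/q) = ennreal (\<bar>c\<bar> * mQ powr (1/q))"
    using q mQ by (simp add: powr_mult powr_powr)
  finally show ?thesis unfolding I_def by simp
qed

lemma jensen:
  assumes Q: "Q \<in> sets mu" and mQ: "emeasure mu Q = ennreal mQ" "0 < mQ" and q: "1 \<le> q"
    and f: "f \<in> borel_measurable mu"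
  shows "ennreal (\<bar>mean mu Q f\<bar> * mQ powr (1/q)) \<le> enn_powr (\<integral>\<^sup>+x\<in>Q. ennreal (\<bar>f x\<bar> powr q) \<partial>mu) (1/q)"
proof -
  define I where "I = (\<integral>\<^sup>+x\<in>Q. ennreal (\<bar>f x\<bar> powr q) \<partial>mu)"
  have mQ': "measure mu Q = mQ" using mQ by (simp add: measure_def)
  show ?thesis
  proof (cases I rule: ennreal_cases)
    case top thus ?thesis by (simp add: I_def)
  next
    case (real Ir)
    have s1: "ennreal \<bar>\<integral>x\<in>Q. f x \<partial>mu\<bar> \<le> (\<integral>\<^sup>+x\<in>Q. ennreal \<bar>f x\<bar> \<partial>mu)"
    proof (cases "set_integrable mu Q f")
      case True
      have "ennreal (norm (\<integral>x. indicator Q x *\<^sub>R f x \<partial>mu)) \<le> (\<integral>\<^sup>+x. norm (indicator Q x *\<^sub>R f x) \<partial>mu)"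
        using True unfolding set_integrable_def by (rule integral_norm_bound_ennreal)
      also have "\<dots> = (\<integral>\<^sup>+x\<in>Q. ennreal \<bar>f x\<bar> \<partial>mu)"
        by (intro nn_integral_cong) (auto split: split_indicator)
      finally show ?thesis by (simp add: set_lebesgue_integral_def)
    next
      case False
      thus ?thesis by (simp add: set_lebesgue_integral_def set_integrable_def not_integrable_integral_eq)
    qed
    have s2: "(\<integral>\<^sup>+x\<in>Q. ennreal \<bar>f x\<bar> \<partial>mu) \<le> ennreal (Ir powr (1/q) * mQ powr (1 - 1/q))"
    proof (cases "Ir = 0")
      case True
      hence "AE x in mu. ennreal (\<bar>f x\<bar> powr q) * indicator Q x = 0"
        using real f Q unfolding I_def by (subst nn_integral_0_iff_AE[symmetric]) auto
      hence "AE x in mu. ennreal \<bar>f x\<bar> * indicator Q x = 0"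
        by eventually_elim (auto split: split_indicator)
      hence "(\<integral>\<^sup>+x\<in>Q. ennreal \<bar>f x\<bar> \<partial>mu) = 0"
        using f Q by (subst nn_integral_0_iff_AE) auto
      thus ?thesis by simp
    next
      case False
      hence Ir: "Ir > 0" using real by auto
      define c where "c = (Ir / mQ) powr (1/q)"
      have c: "c > 0" using Ir mQ by (simp add: c_def)
      have cq: "c powr q = Ir / mQ" using Ir mQ q by (simp add: c_def powr_powr)
      have "(\<integral>\<^sup>+x\<in>Q. ennreal \<bar>f x\<bar> \<partial>mu)
          \<le> (\<integral>\<^sup>+x. ennreal (1 / (q * c powr (q - 1))) * (ennreal (\<bar>f x\<bar> powr q) * indicator Q x)
                + ennreal (c * (1 - 1/q)) * indicator Q x \<partial>mu)"
      proof (intro nn_integral_mono)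
        fix x
        have "\<bar>f x\<bar> \<le> (1 / (q * c powr (q - 1))) * \<bar>f x\<bar> powr q + c * (1 - 1/q)"
          using young_pt[of "\<bar>f x\<bar>" c q] c q by simp
        moreover have "0 \<le> c * (1 - 1/q)" using c q by (simp add: divide_le_eq_1)
        ultimately have "ennreal \<bar>f x\<bar> \<le> ennreal (1 / (q * c powr (q - 1))) * ennreal (\<bar>f x\<bar> powr q) + ennreal (c * (1 - 1/q))"
          using c q by (simp add: ennreal_mult[symmetric] ennreal_plus[symmetric] del: ennreal_plus)
        thus "ennreal \<bar>f x\<bar> * indicator Q x \<le> ennreal (1 / (q * c powr (q - 1))) * (ennreal (\<bar>f x\<bar> powr q) * indicator Q x)
                + ennreal (c * (1 - 1/q)) * indicator Q x"
          by (auto split: split_indicator)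
      qed
      also have "\<dots> = ennreal (1 / (q * c powr (q - 1))) * I + ennreal (c * (1 - 1/q)) * ennreal mQ"
        using Q f unfolding I_def
        by (subst nn_integral_add) (auto simp: nn_integral_cmult nn_integral_cmult_indicator mQ)
      also have "\<dots> = ennreal (Ir / (q * c powr (q - 1)) + c * (1 - 1/q) * mQ)"
        using real c q mQ by (simp add: ennreal_mult[symmetric] ennreal_plus[symmetric] divide_le_eq_1 del: ennreal_plus)
      also have "Ir / (q * c powr (q - 1)) + c * (1 - 1/q) * mQ = c * mQ"
      proof -
        have "c powr (q - 1) = c powr q / c" using c by (simp add: powr_diff)
        hence "Ir / (q * c powr (q - 1)) = c * mQ / q" using cq c Ir mQ q by (simp add: field_simps)
        thus ?thesis using q by (simp add: field_simps)
      qed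
      also have "c * mQ = Ir powr (1/q) * mQ powr (1 - 1/q)"
      proof -
        have "c * mQ = Ir powr (1/q) / mQ powr (1/q) * mQ powr 1" using Ir mQ by (simp add: c_def powr_divide)
        also have "\<dots> = Ir powr (1/q) * mQ powr (1 - 1/q)" using mQ by (simp add: powr_diff)
        finally show ?thesis .
      qed
      finally show ?thesis .
    qed
    have "ennreal (\<bar>mean mu Q f\<bar> * mQ powr (1/q)) = ennreal (\<bar>\<integral>x\<in>Q. f x \<partial>mu\<bar> * mQ powr (1/q - 1))"
      using mQ by (simp add: mean_def mQ' powr_diff)
    also have "\<dots> \<le> ennreal (Ir powr (1/q) * mQ powr (1 - 1/q) * mQ powr (1/q - 1))"
    proof -
      have "ennreal \<bar>\<integral>x\<in>Q. f x \<partial>mu\<bar> \<le> ennreal (Ir powr (1/q) * mQ powr (1 - 1/q))" by (rule order.trans[OF s1 s2])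
      hence "\<bar>\<integral>x\<in>Q. f x \<partial>mu\<bar> \<le> Ir powr (1/q) * mQ powr (1 - 1/q)" by (subst (asm) ennreal_le_iff) auto
      thus ?thesis by (intro ennreal_leI mult_right_mono) auto
    qed
    also have "Ir powr (1/q) * mQ powr (1 - 1/q) * mQ powr (1/q - 1) = Ir powr (1/q)"
      using mQ by (simp add: mult.assoc powr_add[symmetric])
    finally show ?thesis using real by (simp add: I_def)
  qed
qed

end

lemma pow2_powr: "((2::real)^i) powr x = (2 powr x)^i"
  by (induction i) (simp_all add: powr_mult)

lemma ennreal_le_suminf: "f i \<le> (\<Sum>j. f j :: ennreal)"
  using sum_le_suminf[OF summableI, of "{i}" f] by simp

lemma dyadic_index:
  fixes l t :: real
  assumes "0 < l" "l \<le> t"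
  shows "\<exists>i. 2^i * l \<le> t \<and> t < 2^(Suc i) * l"
proof -
  obtain k :: nat where k: "t / l < k" using reals_Archimedean2 by blast
  have "real k < 2^k" using less_exp[of k] by (metis of_nat_less_iff of_nat_numeral of_nat_power)
  moreover have "(2::real)^k \<le> 2^Suc k" by simp
  ultimately have "t / l < 2^Suc k" using k by linarith
  hence ex: "\<exists>i. t < 2^(Suc i) * l" using assms by (auto simp: divide_less_eq)
  define i where "i = (LEAST i. t < 2^(Suc i) * l)"
  have i1: "t < 2^(Suc i) * l" unfolding i_def by (rule LeastI_ex[OF ex])
  have i2: "2^i * l \<le> t"
  proof (cases i)
    case 0 thus ?thesis using assms by simp
  next
    case (Suc i')
    hence "\<not> t < 2^(Suc i') * l" using not_less_Least[of i' "\<lambda>i. t < 2^(Suc i) * l"] unfolding i_def by auto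
    thus ?thesis using Suc by simp
  qed
  show ?thesis using i1 i2 by blast
qed

context setting begin

lemma Qcubes_cases:
  assumes "Q \<in> Qcubes mu"
  obtains (U) "Q = UNIV" "emeasure mu UNIV = ennreal (measure mu UNIV)" "0 < measure mu UNIV"
   | (C) z l where "0 < l" "Q = cube z l" "0 < measure mu (cube z l)"
proof -
  from assms consider "is_cube Q \<and> 0 < emeasure mu Q"
      | "Q = UNIV \<and> 0 < emeasure mu UNIV \<and> emeasure mu UNIV < \<infinity>" by (auto simp: Qcubes_def)
  thus ?thesis
  proof cases
    case 1
    then obtain z l where zl: "0 < l" "Q = cube z l" by (auto elim: is_cubeE)
    have "0 < measure mu (cube z l)" using 1 zl by (simp add: em_cube)
    with zl show ?thesis by (rule C)
  next
    case 2
    hence e: "emeasure mu UNIV = ennreal (measure mu UNIV)" by (intro emeasure_eq_ennreal_measure) auto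
    have "0 < measure mu UNIV" using 2 e by simp
    with 2 e show ?thesis using U by blast
  qed
qed

lemma Qcubes_meas: "Q \<in> Qcubes mu \<Longrightarrow> emeasure mu Q = ennreal (measure mu Q) \<and> 0 < measure mu Q"
  by (erule Qcubes_cases) (auto simp: em_cube)

lemma Qcubes_sets: "Q \<in> Qcubes mu \<Longrightarrow> Q \<in> sets mu" by (erule Qcubes_cases) auto

lemma dil2_Qcubes: assumes "Q \<in> Qcubes mu" shows "dil 2 Q \<in> Qcubes mu \<and> Q \<subseteq> dil 2 Q"
  using assms
proof (cases rule: Qcubes_cases)
  case U thus ?thesis using assms by simp
next
  case (C z l)
  have "measure mu (cube z l) \<le> measure mu (cube z (2 * l))" using C by (intro meas_cube_mono) auto
  moreover have "cube z l \<subseteq> cube z (2 * l)" using C by (intro cube_mono) auto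
  ultimately show ?thesis using C by (auto simp: Qcubes_cube)
qed

lemma doubling_UNIV: assumes "UNIV \<in> Qcubes mu" shows "doubling mu UNIV"
proof -
  have "emeasure mu UNIV = 1 * emeasure mu UNIV" by simp
  also have "\<dots> \<le> 2^(DIM('a)+1) * emeasure mu UNIV"
  proof (intro mult_right_mono)
    show "(1::ennreal) \<le> 2^(DIM('a)+1)" by (rule one_le_power) simp
  qed simp
  finally show ?thesis using assms by (simp add: doubling_def)
qed

lemma doubling_meas: assumes "doubling mu Q"
  shows "Q \<in> Qcubes mu" "measure mu (dil 2 Q) \<le> 2^(DIM('a)+1) * measure mu Q"
proof -
  show Q: "Q \<in> Qcubes mu" using assms by (simp add: doubling_def)
  have "emeasure mu (dil 2 Q) \<le> 2^(DIM('a)+1) * emeasure mu Q" using assms by (simp add: doubling_def)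
  moreover have "emeasure mu (dil 2 Q) = ennreal (measure mu (dil 2 Q))" using dil2_Qcubes[OF Q] Qcubes_meas by blast
  moreover have "emeasure mu Q = ennreal (measure mu Q)" using Q Qcubes_meas by blast
  ultimately show "measure mu (dil 2 Q) \<le> 2^(DIM('a)+1) * measure mu Q"
    by (simp add: ennreal_pow2 ennreal_mult[symmetric] ennreal_le_iff del: ennreal_numeral power_Suc)
qed

lemma star_props: assumes "Q \<in> Qcubes mu" shows "doubling mu (star mu Q) \<and> Q \<subseteq> star mu Q"
  using assms
proof (cases rule: Qcubes_cases)
  case U thus ?thesis using assms doubling_UNIV by (simp add: star_def)
next
  case (C z l)
  define P where "P j = doubling mu (dil (2^j) Q)" for j :: nat
  have "\<exists>j. P j" using ex_doubling[OF C(1) C(3)] C by (simp add: P_def)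
  hence "P (LEAST j. P j)" by (rule LeastI_ex)
  moreover have "Q \<subseteq> dil (2^(LEAST j. P j)) Q"
  proof -
    have "l \<le> 2^(LEAST j. P j) * l" using C(1) by (simp add: one_le_power)
    thus ?thesis using C by (simp add: cube_mono)
  qed
  ultimately show ?thesis by (simp add: star_def P_def)
qed

lemma delta_bound:
  assumes l: "0 < l" and c: "\<And>i. 0 \<le> c i"
    and hc: "\<And>i t. 2^i * l \<le> t \<Longrightarrow> t < 2^(Suc i) * l \<Longrightarrow> \<not> R \<subseteq> cube z t \<Longrightarrow> measure mu (cube z t) \<le> c i"
  shows "delta mu n (cube z l) R \<le> (\<Sum>i. ennreal (c i * (2^i * l) powr (-n)))"
proof -
  define b where "b i = c i * (2^i * l) powr (-n) / (2^i * l)" for i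
  have b0: "0 \<le> b i" for i using c l by (simp add: b_def)
  have "delta mu n (cube z l) R = (\<integral>\<^sup>+ t. indicator {t. l \<le> t \<and> \<not> R \<subseteq> cube z t} t *
        emeasure mu (cube z t) * ennreal (t powr (- n) / t) \<partial>lborel)"
    using l by (simp add: delta_def)
  also have "\<dots> \<le> (\<integral>\<^sup>+ t. (\<Sum>i. ennreal (b i) * indicator {2^i * l..<2^(Suc i) * l} t) \<partial>lborel)"
  proof (intro nn_integral_mono)
    fix t
    show "indicator {t. l \<le> t \<and> \<not> R \<subseteq> cube z t} t * emeasure mu (cube z t) * ennreal (t powr (- n) / t)
       \<le> (\<Sum>i. ennreal (b i) * indicator {2^i * l..<2^(Suc i) * l} t)"
    proof (cases "l \<le> t \<and> \<not> R \<subseteq> cube z t")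
      case False thus ?thesis by simp
    next
      case True
      then obtain i where i: "2^i * l \<le> t" "t < 2^(Suc i) * l" using dyadic_index[OF l] by blast
      have t: "0 < t" using True l by simp
      have pos: "0 < 2^i * l" using l by simp
      have "t powr (-n) \<le> (2^i * l) powr (-n)" using npos pos i by (intro powr_mono2') auto
      moreover have "1 / t \<le> 1 / (2^i * l)" using pos i by (simp add: frac_le)
      ultimately have tb: "t powr (- n) / t \<le> (2^i * l) powr (-n) / (2^i * l)"
        using mult_mono[of "t powr (-n)" "(2^i * l) powr (-n)" "1/t" "1/(2^i * l)"] t by simp
      have mc: "measure mu (cube z t) \<le> c i" using hc[OF i] True by blast
      have prod: "measure mu (cube z t) * (t powr (- n) / t) \<le> c i * ((2^i * l) powr (-n) / (2^i * l))"
        by (rule mult_mono[OF mc tb]) (use c[of i] t in auto)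
      have "emeasure mu (cube z t) * ennreal (t powr (- n) / t) = ennreal (measure mu (cube z t) * (t powr (- n) / t))"
        using t by (simp add: em_cube flip: ennreal_mult)
      also have "\<dots> \<le> ennreal (b i)" unfolding b_def using prod by (intro ennreal_leI) simp
      also have "\<dots> = ennreal (b i) * indicator {2^i * l..<2^(Suc i) * l} t"
        using i by (simp add: indicator_def)
      also have "\<dots> \<le> (\<Sum>i. ennreal (b i) * indicator {2^i * l..<2^(Suc i) * l} t)" by (rule ennreal_le_suminf)
      finally show ?thesis using True by simp
    qed
  qed
  also have "\<dots> = (\<Sum>i. \<integral>\<^sup>+ t. ennreal (b i) * indicator {2^i * l..<2^(Suc i) * l} t \<partial>lborel)"
    by (rule nn_integral_suminf) auto
  also have "\<dots> = (\<Sum>i. ennreal (c i * (2^i * l) powr (-n)))"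
  proof (intro suminf_cong)
    fix i
    have "(\<integral>\<^sup>+ t. ennreal (b i) * indicator {2^i * l..<2^(Suc i) * l} t \<partial>lborel)
        = ennreal (b i) * ennreal (2^(Suc i) * l - 2^i * l)"
      using l by (simp add: nn_integral_cmult_indicator)
    also have "\<dots> = ennreal (c i * (2^i * l) powr (-n))"
      using l b0[of i] by (simp add: ennreal_mult[symmetric] b_def)
    finally show "(\<integral>\<^sup>+ t. ennreal (b i) * indicator {2^i * l..<2^(Suc i) * l} t \<partial>lborel) = ennreal (c i * (2^i * l) powr (-n))" .
  qed
  finally show ?thesis .
qed

end

lemma geo_fin: fixes x :: real assumes "0 \<le> x" "x < 1" shows "(\<Sum>i<j. x^i) \<le> 1 / (1 - x)"
proof -
  have "(\<Sum>i<j. x^i) = (1 - x^j) / (1 - x)" using assms by (simp add: sum_gp_strict)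
  also have "\<dots> \<le> 1 / (1 - x)" using assms by (intro divide_right_mono) auto
  finally show ?thesis .
qed

lemma term_bound:
  fixes l M C n :: real and d i j :: nat
  assumes l: "0 < l" and M: "0 \<le> M" "M \<le> C * (2 * (2^j * l)) powr n" and C: "0 \<le> C"
    and n: "0 < n" "n \<le> real d" and ij: "Suc i \<le> j"
  shows "M * (1/2^(d+1))^(j - Suc i) * (2^i * l) powr (-n) \<le> C * 4 powr n * (1/2)^(j - Suc i)"
proof -
  define s where "s = j - Suc i"
  have j: "j = i + Suc s" using ij by (simp add: s_def)
  define a where "a = (2::real) powr n"
  have a: "0 < a" by (simp add: a_def)
  have ad: "a \<le> 2^d"
  proof -
    have "a \<le> 2 powr (real d)" unfolding a_def using n by (intro powr_mono) auto
    thus ?thesis by (simp add: powr_realpow)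
  qed
  have e1: "(2 * (2^j * l)) powr n = a * a^j * l powr n"
    using l by (simp add: powr_mult pow2_powr a_def)
  have e2: "(2^i * l) powr (-n) = (1/a)^i * l powr (-n)"
    using l by (simp add: powr_mult pow2_powr a_def powr_minus_divide power_one_over field_simps)
  have e3: "a^j * (1/a)^i = a^(Suc s)" using a j by (simp add: power_add field_simps)
  have ln: "l powr n * l powr (-n) = 1" using l by (simp add: powr_add[symmetric])
  have X: "0 \<le> (1/2^(d+1))^s * (2^i * l) powr (-n)" by simp
  have "M * (1/2^(d+1))^(j - Suc i) * (2^i * l) powr (-n) = M * ((1/2^(d+1))^s * (2^i * l) powr (-n))"
    by (simp add: s_def mult.assoc)
  also have "\<dots> \<le> C * (2 * (2^j * l)) powr n * ((1/2^(d+1))^s * (2^i * l) powr (-n))"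
    using M X by (intro mult_right_mono) auto
  also have "\<dots> = C * a * (a^j * (1/a)^i) * (l powr n * l powr (-n)) * (1/2^(d+1))^s"
    unfolding e1 e2 by (simp add: algebra_simps)
  also have "\<dots> = C * a * a * (a / 2^(d+1))^s"
    unfolding e3 ln by (simp add: power_divide algebra_simps)
  also have "\<dots> \<le> C * a * a * (1/2)^s"
  proof -
    have "a / 2^(d+1) \<le> 1/2" using ad by (simp add: divide_le_eq)
    hence "(a / 2^(d+1))^s \<le> (1/2)^s" using a by (intro power_mono) auto
    thus ?thesis using C a by (intro mult_left_mono) auto
  qed
  also have "C * a * a * (1/2)^s = C * 4 powr n * (1/2)^s"
  proof -
    have "a * a = 4 powr n" by (simp add: a_def powr_mult[symmetric])
    thus ?thesis by (simp add: mult.assoc)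
  qed
  finally show ?thesis by (simp add: s_def)
qed

context setting begin

definition "K1 = 1 + 2 * C0 * 2 powr n / (1 - 2 powr (-n)) + 2 * C0 * 4 powr n"

lemma r_props: "0 < 2 powr (-n)" "2 powr (-n) < (1::real)"
  using npos by (auto intro: powr_less_one)

lemma delta_UNIV_case:
  assumes l: "0 < l" and B: "\<And>t. l \<le> t \<Longrightarrow> measure mu (cube z t) \<le> B" and B0: "0 \<le> B"
  shows "delta mu n (cube z l) UNIV \<le> ennreal (B * l powr (-n) / (1 - 2 powr (-n)))"
proof -
  define r :: real where "r = 2 powr (-n)"
  have r: "0 < r" "r < 1" using r_props by (auto simp: r_def)
  have "delta mu n (cube z l) UNIV \<le> (\<Sum>i. ennreal (B * (2^i * l) powr (-n)))"
  proof (rule delta_bound[OF l])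
    fix i t assume "2^i * l \<le> t" "t < 2^(Suc i) * l"
    moreover have "l \<le> 2^i * l" using l by (simp add: one_le_power)
    ultimately show "measure mu (cube z t) \<le> B" using B by simp
  qed (use B0 in simp)
  also have "(\<lambda>i. B * (2^i * l) powr (-n)) = (\<lambda>i. B * l powr (-n) * r^i)"
    using l by (auto simp: powr_mult pow2_powr r_def)
  also have "(\<Sum>i. ennreal (B * l powr (-n) * r^i)) = ennreal (\<Sum>i. B * l powr (-n) * r^i)"
    using r B0 by (intro suminf_ennreal2 summable_mult summable_geometric) auto
  also have "(\<Sum>i. B * l powr (-n) * r^i) = B * l powr (-n) * (1 / (1 - r))"
    using r by (subst suminf_mult) (auto intro: summable_geometric simp: suminf_geometric)
  finally show ?thesis by (simp add: r_def)
qed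

lemma delta_fin_case:
  assumes l: "0 < l" and c: "\<And>i. 0 \<le> c i"
    and hc: "\<And>i t. i < j \<Longrightarrow> 2^i * l \<le> t \<Longrightarrow> t < 2^(Suc i) * l \<Longrightarrow> measure mu (cube z t) \<le> c i"
  shows "delta mu n (cube z l) (cube z (2^j * l)) \<le> ennreal (\<Sum>i<j. c i * (2^i * l) powr (-n))"
proof -
  define c' where "c' i = (if i < j then c i else 0)" for i
  have "delta mu n (cube z l) (cube z (2^j * l)) \<le> (\<Sum>i. ennreal (c' i * (2^i * l) powr (-n)))"
  proof (rule delta_bound[OF l])
    fix i t assume t: "2^i * l \<le> t" "t < 2^(Suc i) * l" "\<not> cube z (2^j * l) \<subseteq> cube z t"
    show "measure mu (cube z t) \<le> c' i"
    proof (cases "i < j")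
      case True thus ?thesis using hc t by (simp add: c'_def)
    next
      case False
      hence "(2::real)^j \<le> 2^i" by (simp add: power_increasing)
      hence "2^j * l \<le> t" using t l by (smt (verit) mult_right_mono)
      hence "cube z (2^j * l) \<subseteq> cube z t" by (rule cube_mono)
      thus ?thesis using t by simp
    qed
  qed (use c in \<open>simp add: c'_def\<close>)
  also have "(\<Sum>i. ennreal (c' i * (2^i * l) powr (-n))) = (\<Sum>i<j. ennreal (c' i * (2^i * l) powr (-n)))"
    by (rule suminf_finite) (auto simp: c'_def)
  also have "\<dots> = ennreal (\<Sum>i<j. c i * (2^i * l) powr (-n))"
    using c by (simp add: c'_def)
  finally show ?thesis .
qed

end

context setting begin

lemma K1_ge: "1 + 2 * C0 * 2 powr n / (1 - 2 powr (-n)) + 2 * C0 * 4 powr n = K1"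
  by (simp add: K1_def)

lemma step:
  assumes S: "doubling mu S" "S \<noteq> UNIV"
  shows "\<exists>T. doubling mu T \<and> S \<subseteq> T \<and> Kcoef mu n S T \<le> ennreal K1 \<and>
    (T \<noteq> UNIV \<longrightarrow> (\<exists>j::nat. T = dil (2^j) S) \<and> 2 * measure mu S \<le> measure mu T)"
proof -
  from doubling_meas(1)[OF S(1)] S(2) obtain z l where C: "0 < l" "S = cube z l" "0 < measure mu (cube z l)"
    by (cases rule: Qcubes_cases) auto
  define m where "m k = measure mu (cube z (2^k * l))" for k :: nat
  define m0 where "m0 = m 0"
  define r :: real where "r = 2 powr (-n)"
  have r: "0 < r" "r < 1" using r_props by (auto simp: r_def)
  have m0S: "measure mu S = m0" using C by (simp add: m0_def m_def)
  have m0pos: "0 < m0" using C by (simp add: m0_def m_def)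
  have m0G: "m0 * l powr (-n) \<le> C0 * 2 powr n"
  proof -
    have "m0 \<le> C0 * (2 * l) powr n" unfolding m0_def m_def using growth_any[OF C(1)] by simp
    hence "m0 * l powr (-n) \<le> C0 * (2 * l) powr n * l powr (-n)" by (intro mult_right_mono) auto
    also have "\<dots> = C0 * 2 powr n * (l powr n * l powr (-n))" using C by (simp add: powr_mult)
    also have "l powr n * l powr (-n) = 1" using C by (simp add: powr_add[symmetric])
    finally show ?thesis by simp
  qed
  have mmono: "m i \<le> m k" if "i \<le> k" for i k
    unfolding m_def using C that by (intro meas_cube_mono mult_right_mono power_increasing) auto
  have cfrac: "0 \<le> 2 * C0 * 2 powr n / (1 - r)" using C0 r by simp
  show ?thesis
  proof (cases "\<exists>i. 2 * m0 \<le> m i")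
    case False
    have lt: "m i < 2 * m0" for i using False by (meson not_le)
    have Bt: "measure mu (cube z t) \<le> 2 * m0" if lt0: "l \<le> t" for t
    proof -
      obtain i where "t < 2^(Suc i) * l" using dyadic_index[OF C(1) lt0] by blast
      hence "measure mu (cube z t) \<le> m (Suc i)" unfolding m_def by (intro meas_cube_mono) simp
      thus ?thesis using lt[of "Suc i"] by simp
    qed
    have UN0: "x \<in> (\<Union>k. cube z (2^k * l))" for x
    proof -
      obtain M where M: "M > 0" "{x} \<subseteq> cube z M" using bounded_in_cube[of "{x}" z] by auto
      obtain i where "max l M < 2^(Suc i) * l" using dyadic_index[OF C(1), of "max l M"] by auto
      hence "cube z M \<subseteq> cube z (2^(Suc i) * l)" by (intro cube_mono) simp
      thus "x \<in> (\<Union>k. cube z (2^k * l))" using M by blast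
    qed
    have UN: "(\<Union>k. cube z (2^k * l)) = UNIV" using UN0 by blast
    have inc: "incseq (\<lambda>k. cube z (2^k * l))"
      by (intro incseq_SucI cube_mono) (use C in simp)
    have "emeasure mu UNIV = (SUP k. emeasure mu (cube z (2^k * l)))"
    proof -
      have rs: "range (\<lambda>k. cube z (2^k * l)) \<subseteq> sets mu" by auto
      show ?thesis using SUP_emeasure_incseq[OF rs inc] UN by simp
    qed
    also have "\<dots> \<le> ennreal (2 * m0)"
      by (intro SUP_least) (use lt in \<open>auto simp: em_cube m_def intro: ennreal_leI less_imp_le\<close>)
    finally have fin: "emeasure mu UNIV \<le> ennreal (2 * m0)" .
    have "emeasure mu S \<le> emeasure mu UNIV" by (intro emeasure_mono) auto
    moreover have "emeasure mu S = ennreal m0" using C m0S by (simp add: em_cube)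
    ultimately have pos: "0 < emeasure mu UNIV" using m0pos by (metis ennreal_less_zero_iff order_less_le_trans)
    have "emeasure mu UNIV < \<infinity>" using fin by (simp add: le_less_trans)
    hence UQ: "UNIV \<in> Qcubes mu" using pos by (auto simp: Qcubes_def)
    have "delta mu n S UNIV \<le> ennreal (2 * m0 * l powr (-n) / (1 - r))"
      using delta_UNIV_case[OF C(1) Bt] m0pos C by (simp add: r_def)
    also have "\<dots> \<le> ennreal (2 * C0 * 2 powr n / (1 - r))"
    proof (intro ennreal_leI divide_right_mono)
      show "2 * m0 * l powr - n \<le> 2 * C0 * 2 powr n" using m0G by simp
    qed (use r in auto)
    finally have "Kcoef mu n S UNIV \<le> 1 + ennreal (2 * C0 * 2 powr n / (1 - r))"
      by (simp add: Kcoef_def add_left_mono)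
    also have "\<dots> \<le> ennreal K1"
    proof -
      have "1 + ennreal (2 * C0 * 2 powr n / (1 - r)) = ennreal (1 + 2 * C0 * 2 powr n / (1 - r))"
        using cfrac by (subst ennreal_plus) auto
      also have "\<dots> \<le> ennreal K1" unfolding K1_def r_def using C0 by (intro ennreal_leI) simp
      finally show ?thesis .
    qed
    finally show ?thesis using doubling_UNIV[OF UQ] by blast
  next
    case True
    define i0 where "i0 = (LEAST i. 2 * m0 \<le> m i)"
    have i0: "2 * m0 \<le> m i0" unfolding i0_def using True by (rule LeastI_ex)
    have below: "m i < 2 * m0" if "i < i0" for i using not_less_Least[of i "\<lambda>i. 2 * m0 \<le> m i"] that
      unfolding i0_def by auto
    have mi0pos: "0 < m i0" using i0 m0pos by simp
    obtain k where k: "doubling mu (cube z (2^k * (2^i0 * l)))"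
      using ex_doubling[of "2^i0 * l" z] C mi0pos by (auto simp: m_def)
    have exj: "\<exists>j. i0 \<le> j \<and> doubling mu (cube z (2^j * l))"
      using k by (intro exI[of _ "k + i0"]) (simp add: power_add mult.assoc)
    define j where "j = (LEAST j. i0 \<le> j \<and> doubling mu (cube z (2^j * l)))"
    have j: "i0 \<le> j" "doubling mu (cube z (2^j * l))" unfolding j_def using LeastI_ex[OF exj] by auto
    have nondbl: "\<not> doubling mu (cube z (2^k * l))" if "i0 \<le> k" "k < j" for k
      using not_less_Least[of k "\<lambda>j. i0 \<le> j \<and> doubling mu (cube z (2^j * l))"] that unfolding j_def by auto
    have grow: "2^(DIM('a)+1) * m k < m (Suc k)" if "i0 \<le> k" "k < j" for k
    proof -
      have "0 < m k" using mmono[of 0 k] m0pos unfolding m0_def by simp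
      moreover have "cube z (2 * (2^k * l)) = cube z (2^Suc k * l)" by (simp add: mult.assoc)
      ultimately show ?thesis using nondbl[OF that] C by (simp add: doubling_cube m_def not_le)
    qed
    have down: "k + t = j \<Longrightarrow> i0 \<le> k \<Longrightarrow> m k * 2^((DIM('a)+1) * t) \<le> m j" for t k
    proof (induction t arbitrary: k)
      case 0 thus ?case by simp
    next
      case (Suc t)
      have "m k * 2^((DIM('a)+1) * Suc t) = (2^(DIM('a)+1) * m k) * 2^((DIM('a)+1) * t)"
        by (simp add: power_add algebra_simps)
      also have "\<dots> \<le> m (Suc k) * 2^((DIM('a)+1) * t)"
        using grow[of k] Suc.prems by (intro mult_right_mono) auto
      also have "\<dots> \<le> m j" using Suc.IH[of "Suc k"] Suc.prems by simp
      finally show ?case .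
    qed
    define c where "c i = (if Suc i < i0 then 2 * m0 else m j * (1/2^(DIM('a)+1))^(j - Suc i))" for i
    have c0: "0 \<le> c i" for i using m0pos unfolding c_def m_def by (auto simp: measure_nonneg)
    have dl1: "delta mu n (cube z l) (cube z (2^j * l)) \<le> ennreal (\<Sum>i<j. c i * (2^i * l) powr (-n))"
    proof (rule delta_fin_case[OF C(1) c0])
      fix i t assume it: "i < j" "2^i * l \<le> t" "t < 2^(Suc i) * l"
      have "measure mu (cube z t) \<le> m (Suc i)" unfolding m_def using it by (intro meas_cube_mono) simp
      also have "m (Suc i) \<le> c i"
      proof (cases "Suc i < i0")
        case True thus ?thesis using below[OF True] by (simp add: c_def)
      next
        case False
        have "m (Suc i) * 2^((DIM('a)+1) * (j - Suc i)) \<le> m j" using down[of "Suc i" "j - Suc i"] it False by simp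
        hence "m (Suc i) \<le> m j / 2^((DIM('a)+1) * (j - Suc i))" by (simp add: le_divide_eq)
        moreover have "m j / 2^((DIM('a)+1) * (j - Suc i)) = m j * (1/2^(DIM('a)+1))^(j - Suc i)"
          by (simp only: power_mult power_one_over) simp
        ultimately show ?thesis using False by (simp add: c_def)
      qed
      finally show "measure mu (cube z t) \<le> c i" .
    qed
    have "(\<Sum>i<j. c i * (2^i * l) powr (-n)) \<le> (\<Sum>i<j. 2 * C0 * 2 powr n * r^i + C0 * 4 powr n * (1/2)^(j - Suc i))"
    proof (intro sum_mono)
      fix i assume i: "i \<in> {..<j}"
      have e2: "(2^i * l) powr (-n) = r^i * l powr (-n)" using C by (simp add: powr_mult pow2_powr r_def)
      show "c i * (2^i * l) powr (-n) \<le> 2 * C0 * 2 powr n * r^i + C0 * 4 powr n * (1/2)^(j - Suc i)"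
      proof (cases "Suc i < i0")
        case True
        have "c i * (2^i * l) powr (-n) = 2 * (m0 * l powr (-n)) * r^i" using True by (simp add: c_def e2)
        also have "\<dots> \<le> 2 * (C0 * 2 powr n) * r^i" using m0G r by (intro mult_right_mono mult_left_mono) auto
        finally have X: "c i * (2^i * l) powr (-n) \<le> 2 * (C0 * 2 powr n) * r^i" .
        have B: "0 \<le> C0 * 4 powr n * (1/2::real)^(j - Suc i)" using C0 by simp
        have "2 * (C0 * 2 powr n) * r^i = 2 * C0 * 2 powr n * r^i" by (simp add: mult.assoc)
        thus ?thesis using X B by linarith
      next
        case False
        have "m j \<le> C0 * (2 * (2^j * l)) powr n" unfolding m_def using C by (intro growth_any) simp
        hence "m j * (1/2^(DIM('a)+1))^(j - Suc i) * (2^i * l) powr (-n) \<le> C0 * 4 powr n * (1/2)^(j - Suc i)"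
          using C C0 npos nd i by (intro term_bound) (auto simp: m_def measure_nonneg)
        thus ?thesis using False C0 r by (simp add: c_def add_increasing)
      qed
    qed
    also have "\<dots> = 2 * C0 * 2 powr n * (\<Sum>i<j. r^i) + C0 * 4 powr n * (\<Sum>i<j. (1/2)^(j - Suc i))"
      by (simp add: sum.distrib sum_distrib_left)
    also have "(\<Sum>i<j. (1/2::real)^(j - Suc i)) = (\<Sum>i<j. (1/2)^i)"
      by (rule sum.nat_diff_reindex)
    also have "2 * C0 * 2 powr n * (\<Sum>i<j. r^i) + C0 * 4 powr n * (\<Sum>i<j. (1/2::real)^i)
        \<le> 2 * C0 * 2 powr n * (1 / (1 - r)) + C0 * 4 powr n * (1 / (1 - 1/2))"
      using r C0 by (intro add_mono mult_left_mono geo_fin) auto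
    finally have dl2: "(\<Sum>i<j. c i * (2^i * l) powr (-n)) \<le> 2 * C0 * 2 powr n * (1 / (1 - r)) + C0 * 4 powr n * (1 / (1 - 1/2))" .
    have dl: "delta mu n S (cube z (2^j * l)) \<le> ennreal (2 * C0 * 2 powr n / (1 - r) + 2 * C0 * 4 powr n)"
      using order.trans[OF dl1 ennreal_leI[OF dl2]] C by (simp add: mult_ac)
    have "Kcoef mu n S (cube z (2^j * l)) \<le> 1 + ennreal (2 * C0 * 2 powr n / (1 - r) + 2 * C0 * 4 powr n)"
      using dl by (simp add: Kcoef_def add_left_mono)
    also have "\<dots> = ennreal K1"
    proof -
      have "ennreal K1 = ennreal (1 + (2 * C0 * 2 powr n / (1 - r) + 2 * C0 * 4 powr n))"
        by (simp add: K1_def r_def add.assoc)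
      also have "\<dots> = 1 + ennreal (2 * C0 * 2 powr n / (1 - r) + 2 * C0 * 4 powr n)"
        using cfrac C0 by (subst ennreal_plus) auto
      finally show ?thesis by simp
    qed
    finally have K: "Kcoef mu n S (cube z (2^j * l)) \<le> ennreal K1" .
    have sub: "S \<subseteq> cube z (2^j * l)" using C by (simp add: cube_mono one_le_power)
    have "2 * measure mu S \<le> measure mu (cube z (2^j * l))"
      using i0 mmono[OF j(1)] m0S by (simp add: m_def)
    moreover have "cube z (2^j * l) = dil (2^j) S" using C by simp
    ultimately show ?thesis using K sub j(2) by metis
  qed
qed

end

lemma telescope: fixes a :: "nat \<Rightarrow> real"
  shows "\<bar>a 0 - a k\<bar> \<le> (\<Sum>i<k. \<bar>a i - a (Suc i)\<bar>)"
proof (induction k)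
  case 0 show ?case by simp
next
  case (Suc k)
  have "\<bar>a 0 - a (Suc k)\<bar> \<le> \<bar>a 0 - a k\<bar> + \<bar>a k - a (Suc k)\<bar>" by linarith
  thus ?case using Suc by simp
qed

lemma pow_big: fixes X y :: real assumes "0 < y" shows "\<exists>k::nat. X < 2^k * y"
proof -
  obtain k :: nat where k: "X / y < k" using reals_Archimedean2 by blast
  have "real k < 2^k" using less_exp[of k] by (metis of_nat_less_iff of_nat_numeral of_nat_power)
  hence "X / y < 2^k" using k by linarith
  thus ?thesis using assms by (auto simp: divide_less_eq)
qed

context setting begin

lemma K1_pos: "1 \<le> K1"
proof -
  have "0 \<le> 2 * C0 * 2 powr n / (1 - 2 powr (-n))" using C0 r_props by simp
  thus ?thesis using C0 by (simp add: K1_def)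
qed

lemma diff_bound:
  assumes Q: "doubling mu Q" and R: "doubling mu R" and QR: "Q \<subseteq> R"
    and K: "Kcoef mu n Q R \<le> ennreal K" and N: "normC mu n p q f \<le> ennreal N" "0 \<le> N" and K0: "0 \<le> K"
  shows "measure mu Q powr (1/p) * \<bar>mean mu Q f - mean mu R f\<bar> \<le> K * N"
proof -
  define x where "x = measure mu Q powr (1/p) * \<bar>mean mu Q f - mean mu R f\<bar>"
  have x0: "0 \<le> x" by (simp add: x_def)
  define B where "B = (SUP (Q, R)\<in>{(Q, R). Q \<in> Qdoubling mu \<and> R \<in> Qdoubling mu \<and> Q \<subseteq> R}.
        ennreal (measure mu Q powr (1/p) * \<bar>mean mu Q f - mean mu R f\<bar>) / Kcoef mu n Q R)"
  have "ennreal x / Kcoef mu n Q R \<le> B"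
    unfolding B_def x_def
    by (rule SUP_upper2[of "(Q, R)"]) (use Q R QR in \<open>auto simp: Qdoubling_def\<close>)
  also have "B \<le> normC mu n p q f" unfolding normC_def B_def by (simp add: add_increasing)
  finally have xd: "ennreal x / Kcoef mu n Q R \<le> ennreal N" using N by simp
  define Kc where "Kc = Kcoef mu n Q R"
  have Kc1: "Kc \<noteq> 0" by (simp add: Kc_def Kcoef_def)
  have Kc2: "Kc < top" using K by (simp add: Kc_def le_less_trans)
  have "ennreal x = ennreal x / Kc * Kc" using Kc1 Kc2 by (simp add: ennreal_divide_times)
  also have "\<dots> \<le> ennreal N * ennreal K" using xd K by (intro mult_mono) (auto simp: Kc_def)
  also have "\<dots> = ennreal (K * N)" using N K0 by (simp add: ennreal_mult mult.commute)
  finally have "x \<le> K * N" using N K0 by (subst (asm) ennreal_le_iff) auto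
  thus ?thesis by (simp add: x_def)
qed

definition nxt :: "'a set \<Rightarrow> 'a set" where
  "nxt T = (if T = UNIV then UNIV else SOME T'. doubling mu T' \<and> T \<subseteq> T' \<and> Kcoef mu n T T' \<le> ennreal K1 \<and>
    (T' \<noteq> UNIV \<longrightarrow> (\<exists>j::nat. T' = dil (2^j) T) \<and> 2 * measure mu T \<le> measure mu T'))"

lemma nxt_props: assumes "doubling mu T" "T \<noteq> UNIV"
  shows "doubling mu (nxt T) \<and> T \<subseteq> nxt T \<and> Kcoef mu n T (nxt T) \<le> ennreal K1 \<and>
    (nxt T \<noteq> UNIV \<longrightarrow> (\<exists>j::nat. nxt T = dil (2^j) T) \<and> 2 * measure mu T \<le> measure mu (nxt T))"
  unfolding nxt_def using someI_ex[OF step[OF assms]] assms(2) by simp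

end

context setting begin

lemma key:
  assumes p: "1 \<le> p" and N: "normC mu n p q f \<le> ennreal N" "0 \<le> N"
    and lim: "mean_lim_zero mu f" and S: "doubling mu S"
  shows "measure mu S powr (1/p) * \<bar>mean mu S f\<bar> \<le> K1 * N / (1 - 2 powr (-(1/p)))"
proof -
  define \<rho> :: real where "\<rho> = 2 powr (-(1/p))"
  have \<rho>: "0 < \<rho>" "\<rho> < 1" using p by (auto simp: \<rho>_def intro: powr_less_one)
  have rhs0: "0 \<le> K1 * N / (1 - \<rho>)" using K1_pos N \<rho> by simp
  show ?thesis
  proof (cases "S = UNIV")
    case True
    have dU: "UNIV \<in> Qdoubling mu" using S True by (simp add: Qdoubling_def)
    have "\<bar>mean mu UNIV f\<bar> \<le> 0 + e" if e: "0 < e" for e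
    proof -
      obtain Q where Q: "Q \<in> Qdoubling mu" "\<forall>R\<in>Qdoubling mu. Q \<subseteq> R \<longrightarrow> \<bar>mean mu R f\<bar> \<le> e"
        using lim e unfolding mean_lim_zero_def by blast
      have "Q \<subseteq> UNIV" by simp
      hence "\<bar>mean mu UNIV f\<bar> \<le> e" using Q(2) dU by blast
      thus ?thesis by simp
    qed
    hence "\<bar>mean mu UNIV f\<bar> \<le> 0" by (rule field_le_epsilon)
    hence m0: "mean mu UNIV f = 0" by simp
    have eq0: "measure mu S powr (1/p) * \<bar>mean mu S f\<bar> = 0" using True m0 by simp
    show ?thesis using eq0 rhs0 unfolding \<rho>_def by linarith
  next
    case False
    from doubling_meas(1)[OF S] False obtain z l where C: "0 < l" "S = cube z l" "0 < measure mu (cube z l)"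
      by (cases rule: Qcubes_cases) auto
    define mS where "mS = measure mu S"
    have mS: "0 < mS" using C by (simp add: mS_def)
    define Rs where "Rs k = (nxt ^^ k) S" for k
    have RsS: "Rs (Suc k) = nxt (Rs k)" for k by (simp add: Rs_def)
    have inv: "doubling mu (Rs k) \<and> S \<subseteq> Rs k \<and> (Rs k \<noteq> UNIV \<longrightarrow> (\<exists>s. l \<le> s \<and> Rs k = cube z s) \<and> 2^k * mS \<le> measure mu (Rs k))" for k
    proof (induction k)
      case 0
      have R0: "Rs 0 = cube z l" using C by (simp add: Rs_def)
      have "2^0 * mS \<le> measure mu (Rs 0)" using R0 C by (simp add: mS_def)
      thus ?case using S C R0 by (simp add: Rs_def) blast
    next
      case (Suc k)
      show ?case
      proof (cases "Rs k = UNIV")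
        case True
        thus ?thesis using Suc by (simp add: RsS nxt_def)
      next
        case False
        then obtain s where s: "l \<le> s" "Rs k = cube z s" and mk: "2^k * mS \<le> measure mu (Rs k)" using Suc by blast
        have P: "doubling mu (nxt (Rs k)) \<and> Rs k \<subseteq> nxt (Rs k) \<and>
            (nxt (Rs k) \<noteq> UNIV \<longrightarrow> (\<exists>j::nat. nxt (Rs k) = dil (2^j) (Rs k)) \<and> 2 * measure mu (Rs k) \<le> measure mu (nxt (Rs k)))"
          using nxt_props[of "Rs k"] Suc False by blast
        have "nxt (Rs k) \<noteq> UNIV \<longrightarrow> (\<exists>s. l \<le> s \<and> nxt (Rs k) = cube z s) \<and> 2^Suc k * mS \<le> measure mu (nxt (Rs k))"
        proof
          assume ne: "nxt (Rs k) \<noteq> UNIV"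
          then obtain j :: nat where j: "nxt (Rs k) = dil (2^j) (Rs k)" using P by blast
          have sp: "0 < s" using s C by simp
          have "(1::real) \<le> 2^j" by (simp add: one_le_power)
          hence "1 * s \<le> 2^j * s" using sp by (intro mult_right_mono) auto
          hence "l \<le> 2^j * s" using s by simp
          moreover have "nxt (Rs k) = cube z (2^j * s)" using j s sp by simp
          moreover have "2^Suc k * mS \<le> measure mu (nxt (Rs k))" using P ne mk by simp
          ultimately show "(\<exists>s. l \<le> s \<and> nxt (Rs k) = cube z s) \<and> 2^Suc k * mS \<le> measure mu (nxt (Rs k))" by blast
        qed
        moreover have "S \<subseteq> nxt (Rs k)" using P Suc.IH by blast
        ultimately show ?thesis using P unfolding RsS by blast
      qed
    qed
    define A where "A = K1 * N / mS powr (1/p)"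
    have A0: "0 \<le> A" using K1_pos N mS by (simp add: A_def)
    have dk: "\<bar>mean mu (Rs k) f - mean mu (Rs (Suc k)) f\<bar> \<le> A * \<rho>^k" for k
    proof (cases "Rs k = UNIV")
      case True thus ?thesis using A0 \<rho> by (simp add: RsS nxt_def)
    next
      case False
      have P: "doubling mu (nxt (Rs k)) \<and> Rs k \<subseteq> nxt (Rs k) \<and> Kcoef mu n (Rs k) (nxt (Rs k)) \<le> ennreal K1"
        using nxt_props[of "Rs k"] inv[of k] False by blast
      have dk0: "doubling mu (Rs k)" using inv[of k] by blast
      have K10: "0 \<le> K1" using K1_pos by simp
      have db: "measure mu (Rs k) powr (1/p) * \<bar>mean mu (Rs k) f - mean mu (Rs (Suc k)) f\<bar> \<le> K1 * N"
        unfolding RsS using diff_bound[OF dk0, of "nxt (Rs k)" K1 p q f N] P N K10 by blast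
      have mk: "2^k * mS \<le> measure mu (Rs k)" using inv[of k] False by blast
      have pos: "0 < (2^k * mS) powr (1/p)" using mS by simp
      have pm: "(2^k * mS) powr (1/p) \<le> measure mu (Rs k) powr (1/p)" using mk mS p by (intro powr_mono2) auto
      have "(2^k * mS) powr (1/p) * \<bar>mean mu (Rs k) f - mean mu (Rs (Suc k)) f\<bar> \<le> K1 * N"
        using db mult_right_mono[OF pm abs_ge_zero[of "mean mu (Rs k) f - mean mu (Rs (Suc k)) f"]] by linarith
      hence "\<bar>mean mu (Rs k) f - mean mu (Rs (Suc k)) f\<bar> \<le> K1 * N / (2^k * mS) powr (1/p)"
        using pos by (simp add: le_divide_eq mult.commute)
      also have "K1 * N / (2^k * mS) powr (1/p) = A * \<rho>^k"
      proof -
        have "(2^k * mS) powr (1/p) = (2 powr (1/p))^k * mS powr (1/p)" using mS by (simp add: powr_mult pow2_powr)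
        moreover have "\<rho>^k = 1 / (2 powr (1/p))^k" by (simp add: \<rho>_def powr_minus_divide power_one_over)
        ultimately show ?thesis by (simp add: A_def)
      qed
      finally show ?thesis .
    qed
    have tel: "\<bar>mean mu S f - mean mu (Rs k) f\<bar> \<le> A / (1 - \<rho>)" for k
    proof -
      have "\<bar>mean mu (Rs 0) f - mean mu (Rs k) f\<bar> \<le> (\<Sum>i<k. \<bar>mean mu (Rs i) f - mean mu (Rs (Suc i)) f\<bar>)"
        by (rule telescope)
      also have "\<dots> \<le> (\<Sum>i<k. A * \<rho>^i)" by (intro sum_mono dk)
      also have "\<dots> = A * (\<Sum>i<k. \<rho>^i)" by (simp add: sum_distrib_left)
      also have "\<dots> \<le> A * (1 / (1 - \<rho>))" using \<rho> A0 by (intro mult_left_mono geo_fin) auto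
      finally show ?thesis by (simp add: Rs_def)
    qed
    have "\<bar>mean mu S f\<bar> \<le> A / (1 - \<rho>) + e" if e: "0 < e" for e
    proof -
      obtain Q where Q: "Q \<in> Qdoubling mu" "\<forall>R\<in>Qdoubling mu. Q \<subseteq> R \<longrightarrow> \<bar>mean mu R f\<bar> \<le> e"
        using lim e unfolding mean_lim_zero_def by blast
      have QQ: "Q \<in> Qcubes mu" using Q by (simp add: Qdoubling_def doubling_def)
      have "\<exists>k. Q \<subseteq> Rs k"
      proof (cases "Q = UNIV")
        case True
        hence fin: "emeasure mu UNIV = ennreal (measure mu UNIV)" using QQ Qcubes_meas by blast
        obtain k where k: "measure mu UNIV < 2^k * mS" using pow_big[OF mS] by blast
        have "Rs k = UNIV"
        proof (rule ccontr)
          assume ne: "Rs k \<noteq> UNIV"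
          have "2^k * mS \<le> measure mu (Rs k)" using inv[of k] ne by blast
          moreover have "measure mu (Rs k) \<le> measure mu UNIV"
          proof (rule measure_mono_fmeasurable)
            show "Rs k \<in> sets mu" using inv[of k] doubling_meas(1) Qcubes_sets by blast
            show "UNIV \<in> fmeasurable mu" using fin by (intro fmeasurableI) auto
          qed simp
          ultimately show False using k by simp
        qed
        thus ?thesis by blast
      next
        case False
        from QQ False obtain w s where ws: "0 < s" "Q = cube w s" by (cases rule: Qcubes_cases) auto
        obtain M where M: "M > 0" "Q \<subseteq> cube z M" using bounded_in_cube[of Q z] ws by auto
        obtain k where k: "measure mu (cube z M) < 2^k * mS" using pow_big[OF mS] by blast
        show ?thesis
        proof (cases "Rs k = UNIV")
          case True thus ?thesis by blast
        next
          case ne: False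
          then obtain s' where s': "Rs k = cube z s'" and mk: "2^k * mS \<le> measure mu (Rs k)" using inv[of k] by blast
          have "M \<le> s'"
          proof (rule ccontr)
            assume "\<not> M \<le> s'"
            hence "measure mu (cube z s') \<le> measure mu (cube z M)" by (intro meas_cube_mono) simp
            thus False using k mk s' by simp
          qed
          hence "cube z M \<subseteq> Rs k" using s' by (simp add: cube_mono)
          thus ?thesis using M by blast
        qed
      qed
      then obtain k where k: "Q \<subseteq> Rs k" by blast
      have "Rs k \<in> Qdoubling mu" using inv[of k] by (simp add: Qdoubling_def)
      hence "\<bar>mean mu (Rs k) f\<bar> \<le> e" using Q(2) k by blast
      thus ?thesis using tel[of k] by linarith
    qed
    hence "\<bar>mean mu S f\<bar> \<le> A / (1 - \<rho>)" by (rule field_le_epsilon)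
    hence "mS powr (1/p) * \<bar>mean mu S f\<bar> \<le> mS powr (1/p) * (A / (1 - \<rho>))" by (intro mult_left_mono) auto
    also have "\<dots> = K1 * N / (1 - \<rho>)" using mS by (simp add: A_def)
    finally show ?thesis by (simp add: mS_def \<rho>_def)
  qed
qed

end

lemma ennreal_div_ge1: assumes "1 \<le> K" shows "x / K \<le> (x::ennreal)"
proof (rule divide_le_posI_ennreal)
  show "0 < K" using assms by (metis order_less_le_trans zero_less_one)
  have "1 * x \<le> K * x" using assms by (intro mult_right_mono) auto
  thus "x \<le> K * x" by simp
qed

context setting begin

lemma Qmeas_mono: assumes "A \<in> Qcubes mu" "B \<in> Qcubes mu" "A \<subseteq> B" shows "measure mu A \<le> measure mu B"
proof (rule measure_mono_fmeasurable)
  show "A \<in> sets mu" using assms(1) by (rule Qcubes_sets)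
  have "emeasure mu B = ennreal (measure mu B)" using Qcubes_meas[OF assms(2)] by blast
  thus "B \<in> fmeasurable mu" using Qcubes_sets[OF assms(2)] by (intro fmeasurableI) auto
qed (rule assms(3))

lemma dbl_jensen:
  assumes S: "doubling mu S" and q: "1 \<le> q" "q \<le> p" and f: "f \<in> borel_measurable mu"
  shows "ennreal (measure mu S powr (1/p) * \<bar>mean mu S f\<bar>) \<le> ennreal ((2^(DIM('a)+1)) powr (1/q - 1/p)) * normM mu p q f"
proof -
  have SQ: "S \<in> Qcubes mu" using doubling_meas(1)[OF S] .
  have S2Q: "dil 2 S \<in> Qcubes mu" "S \<subseteq> dil 2 S" using dil2_Qcubes[OF SQ] by auto
  define mS where "mS = measure mu S"
  define m2 where "m2 = measure mu (dil 2 S)"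
  have mS: "0 < mS" "emeasure mu S = ennreal mS" using Qcubes_meas[OF SQ] by (auto simp: mS_def)
  have m2le: "m2 \<le> 2^(DIM('a)+1) * mS" using doubling_meas(2)[OF S] by (simp add: m2_def mS_def)
  have m2pos: "0 < m2" using Qcubes_meas[OF S2Q(1)] by (simp add: m2_def)
  define a where "a = 1/p - 1/q"
  have a: "a \<le> 0" using q by (simp add: a_def frac_le)
  define b :: real where "b = 2^(DIM('a)+1)"
  have b: "0 < b" by (simp add: b_def)
  define E where "E = enn_powr (\<integral>\<^sup>+x\<in>S. ennreal (\<bar>f x\<bar> powr q) \<partial>mu) (1/q)"
  have J: "ennreal (\<bar>mean mu S f\<bar> * mS powr (1/q)) \<le> E"
    using jensen[OF Qcubes_sets[OF SQ] mS(2) mS(1) q(1) f] by (simp add: E_def)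
  have T: "ennreal (m2 powr a) * E \<le> normM mu p q f"
    unfolding normM_def E_def m2_def a_def by (rule SUP_upper2[OF SQ]) simp
  have ma: "mS powr a \<le> b powr (-a) * m2 powr a"
  proof -
    have "(b * mS) powr a \<le> m2 powr a" using m2le m2pos a by (intro powr_mono2') (auto simp: b_def)
    hence "b powr a * mS powr a \<le> m2 powr a" using b mS by (simp add: powr_mult)
    hence "b powr (-a) * (b powr a * mS powr a) \<le> b powr (-a) * m2 powr a" by (intro mult_left_mono) auto
    moreover have "b powr (-a) * (b powr a * mS powr a) = mS powr a"
      using b by (simp add: mult.assoc[symmetric] powr_add[symmetric])
    ultimately show ?thesis by simp
  qed
  have eqm: "mS powr (1/p) * \<bar>mean mu S f\<bar> = mS powr a * (\<bar>mean mu S f\<bar> * mS powr (1/q))"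
    using mS by (simp add: a_def powr_diff powr_add[symmetric] field_simps)
  have "ennreal (mS powr (1/p) * \<bar>mean mu S f\<bar>) = ennreal (mS powr a * (\<bar>mean mu S f\<bar> * mS powr (1/q)))"
    by (simp only: eqm)
  also have "\<dots> = ennreal (mS powr a) * ennreal (\<bar>mean mu S f\<bar> * mS powr (1/q))"
    by (rule ennreal_mult) auto
  also have "\<dots> \<le> ennreal (b powr (-a) * m2 powr a) * E"
    using ma J by (intro mult_mono ennreal_leI) auto
  also have "\<dots> = ennreal (b powr (-a)) * (ennreal (m2 powr a) * E)" by (simp add: ennreal_mult mult.assoc)
  also have "\<dots> \<le> ennreal (b powr (-a)) * normM mu p q f" using T by (intro mult_left_mono) auto
  finally show ?thesis by (simp add: mS_def b_def a_def)
qed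

lemma main:
  assumes q: "1 \<le> q" "q \<le> p"
  shows "\<exists>C>0. \<forall>f. in_C mu n p q f \<and> mean_lim_zero mu f \<longrightarrow>
            ennreal (1 / C) * normC mu n p q f \<le> normM mu p q f \<and>
            normM mu p q f \<le> ennreal C * normC mu n p q f"
proof -
  have p: "1 \<le> p" using q by simp
  define \<rho> :: real where "\<rho> = 2 powr (-(1/p))"
  have \<rho>: "0 < \<rho>" "\<rho> < 1" using p by (auto simp: \<rho>_def intro: powr_less_one)
  define \<beta> :: real where "\<beta> = (2^(DIM('a)+1)) powr (1/q - 1/p)"
  have \<beta>: "0 \<le> \<beta>" by (simp add: \<beta>_def)
  define Cu where "Cu = 2 * (1 + K1 / (1 - \<rho>))"
  define Cl where "Cl = 2 + 4 * \<beta>"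
  define C where "C = max Cu Cl"
  have Cu: "0 < Cu" using K1_pos \<rho> by (simp add: Cu_def add_pos_nonneg)
  have Cl: "0 < Cl" using \<beta> by (simp add: Cl_def)
  have C: "0 < C" "Cu \<le> C" "Cl \<le> C" using Cu by (auto simp: C_def)
  have a: "1/p - 1/q \<le> 0" using q by (simp add: frac_le)
  show ?thesis
  proof (intro exI[of _ C] conjI allI impI C(1))
    fix f assume f: "in_C mu n p q f \<and> mean_lim_zero mu f"
    have fm: "f \<in> borel_measurable mu" using f by (simp add: in_C_def L1_loc_def)
    have lim: "mean_lim_zero mu f" using f by simp
    have fin: "normC mu n p q f < \<infinity>" using f by (simp add: in_C_def)
    then obtain N where N: "normC mu n p q f = ennreal N" "0 \<le> N" by (cases "normC mu n p q f" rule: ennreal_cases) auto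
    have up: "normM mu p q f \<le> ennreal Cu * normC mu n p q f"
    proof -
      have "normM mu p q f \<le> ennreal (Cu * N)"
        unfolding normM_def
      proof (rule SUP_least)
        fix Q assume QQ: "Q \<in> Qcubes mu"
        define Qs where "Qs = star mu Q"
        define ms where "ms = mean mu Qs f"
        define mQ where "mQ = measure mu Q"
        define m2 where "m2 = measure mu (dil 2 Q)"
        have sp: "doubling mu Qs" "Q \<subseteq> Qs" using star_props[OF QQ] by (auto simp: Qs_def)
        have QsQ: "Qs \<in> Qcubes mu" using doubling_meas(1)[OF sp(1)] .
        have Q2: "dil 2 Q \<in> Qcubes mu" "Q \<subseteq> dil 2 Q" using dil2_Qcubes[OF QQ] by auto
        have mQ: "0 < mQ" "emeasure mu Q = ennreal mQ" using Qcubes_meas[OF QQ] by (auto simp: mQ_def)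
        have m2Q: "mQ \<le> m2" unfolding mQ_def m2_def using Qmeas_mono[OF QQ Q2(1) Q2(2)] .
        have mQs: "mQ \<le> measure mu Qs" unfolding mQ_def using Qmeas_mono[OF QQ QsQ sp(2)] .
        define X where "X = enn_powr (\<integral>\<^sup>+x\<in>Q. ennreal (\<bar>f x - ms\<bar> powr q) \<partial>mu) (1/q)"
        have tri: "enn_powr (\<integral>\<^sup>+x\<in>Q. ennreal (\<bar>f x\<bar> powr q) \<partial>mu) (1/q) \<le> 2 * (X + ennreal (\<bar>ms\<bar> * mQ powr (1/q)))"
          using Lq_tri[OF Qcubes_sets[OF QQ] mQ(2) less_imp_le[OF mQ(1)] q(1), of "\<lambda>x. f x - ms" ms] fm
          by (simp add: X_def)
        have t1: "ennreal (m2 powr (1/p - 1/q)) * X \<le> normC mu n p q f"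
        proof -
          have "ennreal (m2 powr (1/p - 1/q)) * X \<le> (SUP Q\<in>Qcubes mu. ennreal (measure mu (dil 2 Q) powr (1/p - 1/q)) *
              enn_powr (\<integral>\<^sup>+ x\<in>Q. ennreal (\<bar>f x - mean mu (star mu Q) f\<bar> powr q) \<partial>mu) (1/q))"
            unfolding X_def m2_def ms_def Qs_def by (rule SUP_upper2[OF QQ]) simp
          also have "\<dots> \<le> normC mu n p q f" unfolding normC_def by (rule add_increasing2) auto
          finally show ?thesis .
        qed
        have t2: "m2 powr (1/p - 1/q) * (\<bar>ms\<bar> * mQ powr (1/q)) \<le> K1 * N / (1 - \<rho>)"
        proof -
          have "m2 powr (1/p - 1/q) \<le> mQ powr (1/p - 1/q)" using m2Q mQ a by (intro powr_mono2') auto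
          hence "m2 powr (1/p - 1/q) * (\<bar>ms\<bar> * mQ powr (1/q)) \<le> mQ powr (1/p - 1/q) * (\<bar>ms\<bar> * mQ powr (1/q))"
            by (intro mult_right_mono) auto
          also have "\<dots> = mQ powr (1/p) * \<bar>ms\<bar>" using mQ by (simp add: powr_add[symmetric] mult_ac)
          also have "\<dots> \<le> measure mu Qs powr (1/p) * \<bar>ms\<bar>" using mQs mQ p by (intro mult_right_mono powr_mono2) auto
          also have "\<dots> \<le> K1 * N / (1 - 2 powr (-(1/p)))" unfolding ms_def by (rule key[OF p N(1)[THEN eq_refl] N(2) lim sp(1)])
          finally show ?thesis by (simp add: \<rho>_def)
        qed
        have "ennreal (measure mu (dil 2 Q) powr (1 / p - 1 / q)) *
            enn_powr (\<integral>\<^sup>+x\<in>Q. ennreal (\<bar>f x\<bar> powr q) \<partial>mu) (1 / q)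
          \<le> ennreal (m2 powr (1/p - 1/q)) * (2 * (X + ennreal (\<bar>ms\<bar> * mQ powr (1/q))))"
          unfolding m2_def using tri by (intro mult_left_mono) auto
        also have "\<dots> = 2 * (ennreal (m2 powr (1/p - 1/q)) * X + ennreal (m2 powr (1/p - 1/q) * (\<bar>ms\<bar> * mQ powr (1/q))))"
          by (simp add: ennreal_mult distrib_left mult_ac)
        also have "\<dots> \<le> 2 * (ennreal N + ennreal (K1 * N / (1 - \<rho>)))"
          using t1 t2 N by (intro mult_left_mono add_mono ennreal_leI) auto
        also have "\<dots> = ennreal (Cu * N)"
        proof -
          have nn: "0 \<le> K1 * N / (1 - \<rho>)" using N K1_pos \<rho> by simp
          have e1: "ennreal N + ennreal (K1 * N / (1 - \<rho>)) = ennreal (N + K1 * N / (1 - \<rho>))" using nn N by simp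
          have e2a: "ennreal (2 * (N + K1 * N / (1 - \<rho>))) = ennreal 2 * ennreal (N + K1 * N / (1 - \<rho>))"
            by (rule ennreal_mult') simp
          have e2: "2 * ennreal (N + K1 * N / (1 - \<rho>)) = ennreal (2 * (N + K1 * N / (1 - \<rho>)))"
            unfolding e2a by simp
          have e3: "2 * (N + K1 * N / (1 - \<rho>)) = Cu * N" using \<rho> by (simp add: Cu_def field_simps)
          show ?thesis using e1 e2 e3 by simp
        qed
        finally show "ennreal (measure mu (dil 2 Q) powr (1 / p - 1 / q)) *
            enn_powr (\<integral>\<^sup>+x\<in>Q. ennreal (\<bar>f x\<bar> powr q) \<partial>mu) (1 / q) \<le> ennreal (Cu * N)" .
      qed
      thus ?thesis using N Cu by (simp add: ennreal_mult)
    qed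
    have low: "normC mu n p q f \<le> ennreal Cl * normM mu p q f"
    proof (cases "normM mu p q f" rule: ennreal_cases)
      case top thus ?thesis using Cl by (simp add: ennreal_mult_top)
    next
      case (real M)
      have dj: "measure mu S powr (1/p) * \<bar>mean mu S f\<bar> \<le> \<beta> * M" if "doubling mu S" for S
      proof -
        have "ennreal (measure mu S powr (1/p) * \<bar>mean mu S f\<bar>) \<le> ennreal \<beta> * ennreal M"
          using dbl_jensen[OF that q fm] real by (simp add: \<beta>_def)
        also have "\<dots> = ennreal (\<beta> * M)" using \<beta> real by (simp add: ennreal_mult)
        finally show ?thesis using \<beta> real by (subst (asm) ennreal_le_iff) auto
      qed
      have T1: "(SUP Q\<in>Qcubes mu. ennreal (measure mu (dil 2 Q) powr (1/p - 1/q)) *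
              enn_powr (\<integral>\<^sup>+ x\<in>Q. ennreal (\<bar>f x - mean mu (star mu Q) f\<bar> powr q) \<partial>mu) (1/q))
          \<le> ennreal (2 * (M + \<beta> * M))"
      proof (rule SUP_least)
        fix Q assume QQ: "Q \<in> Qcubes mu"
        define Qs where "Qs = star mu Q"
        define ms where "ms = mean mu Qs f"
        define mQ where "mQ = measure mu Q"
        define m2 where "m2 = measure mu (dil 2 Q)"
        have sp: "doubling mu Qs" "Q \<subseteq> Qs" using star_props[OF QQ] by (auto simp: Qs_def)
        have QsQ: "Qs \<in> Qcubes mu" using doubling_meas(1)[OF sp(1)] .
        have Q2: "dil 2 Q \<in> Qcubes mu" "Q \<subseteq> dil 2 Q" using dil2_Qcubes[OF QQ] by auto
        have mQ: "0 < mQ" "emeasure mu Q = ennreal mQ" using Qcubes_meas[OF QQ] by (auto simp: mQ_def)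
        have m2Q: "mQ \<le> m2" unfolding mQ_def m2_def using Qmeas_mono[OF QQ Q2(1) Q2(2)] .
        have mQs: "mQ \<le> measure mu Qs" unfolding mQ_def using Qmeas_mono[OF QQ QsQ sp(2)] .
        define Y where "Y = enn_powr (\<integral>\<^sup>+x\<in>Q. ennreal (\<bar>f x\<bar> powr q) \<partial>mu) (1/q)"
        have tri: "enn_powr (\<integral>\<^sup>+x\<in>Q. ennreal (\<bar>f x - ms\<bar> powr q) \<partial>mu) (1/q) \<le> 2 * (Y + ennreal (\<bar>ms\<bar> * mQ powr (1/q)))"
          using Lq_tri[OF Qcubes_sets[OF QQ] mQ(2) less_imp_le[OF mQ(1)] q(1) fm, of "- ms"]
          by (simp add: Y_def)
        have t1: "ennreal (m2 powr (1/p - 1/q)) * Y \<le> ennreal M"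
        proof -
          have "ennreal (m2 powr (1/p - 1/q)) * Y \<le> normM mu p q f"
            unfolding Y_def m2_def normM_def by (rule SUP_upper2[OF QQ]) simp
          thus ?thesis using real by simp
        qed
        have t2: "m2 powr (1/p - 1/q) * (\<bar>ms\<bar> * mQ powr (1/q)) \<le> \<beta> * M"
        proof -
          have "m2 powr (1/p - 1/q) \<le> mQ powr (1/p - 1/q)" using m2Q mQ a by (intro powr_mono2') auto
          hence "m2 powr (1/p - 1/q) * (\<bar>ms\<bar> * mQ powr (1/q)) \<le> mQ powr (1/p - 1/q) * (\<bar>ms\<bar> * mQ powr (1/q))"
            by (intro mult_right_mono) auto
          also have "\<dots> = mQ powr (1/p) * \<bar>ms\<bar>" using mQ by (simp add: powr_add[symmetric] mult_ac)
          also have "\<dots> \<le> measure mu Qs powr (1/p) * \<bar>ms\<bar>" using mQs mQ p by (intro mult_right_mono powr_mono2) auto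
          also have "\<dots> \<le> \<beta> * M" unfolding ms_def by (rule dj[OF sp(1)])
          finally show ?thesis .
        qed
        have "ennreal (measure mu (dil 2 Q) powr (1 / p - 1 / q)) *
            enn_powr (\<integral>\<^sup>+x\<in>Q. ennreal (\<bar>f x - mean mu (star mu Q) f\<bar> powr q) \<partial>mu) (1 / q)
          \<le> ennreal (m2 powr (1/p - 1/q)) * (2 * (Y + ennreal (\<bar>ms\<bar> * mQ powr (1/q))))"
          unfolding m2_def ms_def Qs_def using tri unfolding ms_def Qs_def by (intro mult_left_mono) auto
        also have "\<dots> = 2 * (ennreal (m2 powr (1/p - 1/q)) * Y + ennreal (m2 powr (1/p - 1/q) * (\<bar>ms\<bar> * mQ powr (1/q))))"
          by (simp add: ennreal_mult distrib_left mult_ac)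
        also have "\<dots> \<le> 2 * (ennreal M + ennreal (\<beta> * M))"
          using t1 t2 by (intro mult_left_mono add_mono ennreal_leI) auto
        also have "\<dots> = ennreal (2 * (M + \<beta> * M))"
        proof -
          have s2: "ennreal (2 * (M + \<beta> * M)) = ennreal 2 * ennreal (M + \<beta> * M)" by (rule ennreal_mult') simp
          show ?thesis unfolding s2 using real \<beta> by simp
        qed
        finally show "ennreal (measure mu (dil 2 Q) powr (1 / p - 1 / q)) *
            enn_powr (\<integral>\<^sup>+x\<in>Q. ennreal (\<bar>f x - mean mu (star mu Q) f\<bar> powr q) \<partial>mu) (1 / q)
          \<le> ennreal (2 * (M + \<beta> * M))" .
      qed
      have T2: "(SUP (Q, R)\<in>{(Q, R). Q \<in> Qdoubling mu \<and> R \<in> Qdoubling mu \<and> Q \<subseteq> R}.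
          ennreal (measure mu Q powr (1/p) * \<bar>mean mu Q f - mean mu R f\<bar>) / Kcoef mu n Q R) \<le> ennreal (2 * \<beta> * M)"
      proof (rule SUP_least)
        fix QR assume QR: "QR \<in> {(Q, R). Q \<in> Qdoubling mu \<and> R \<in> Qdoubling mu \<and> Q \<subseteq> R}"
        obtain Q R where QRe: "QR = (Q, R)" by (cases QR)
        have Q: "doubling mu Q" and R: "doubling mu R" and sub: "Q \<subseteq> R" using QR QRe by (auto simp: Qdoubling_def)
        have QQ: "Q \<in> Qcubes mu" and RQ: "R \<in> Qcubes mu" using Q R doubling_meas(1) by auto
        have mQR: "measure mu Q powr (1/p) \<le> measure mu R powr (1/p)"
          using Qmeas_mono[OF QQ RQ sub] p by (intro powr_mono2) auto
        have x: "measure mu Q powr (1/p) * \<bar>mean mu Q f - mean mu R f\<bar> \<le> 2 * \<beta> * M"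
        proof -
          have "measure mu Q powr (1/p) * \<bar>mean mu Q f - mean mu R f\<bar>
              \<le> measure mu Q powr (1/p) * (\<bar>mean mu Q f\<bar> + \<bar>mean mu R f\<bar>)"
            by (intro mult_left_mono) auto
          also have "\<dots> = measure mu Q powr (1/p) * \<bar>mean mu Q f\<bar> + measure mu Q powr (1/p) * \<bar>mean mu R f\<bar>"
            by (simp add: distrib_left)
          also have "\<dots> \<le> \<beta> * M + measure mu R powr (1/p) * \<bar>mean mu R f\<bar>"
            using dj[OF Q] mQR by (intro add_mono mult_right_mono) auto
          also have "\<dots> \<le> \<beta> * M + \<beta> * M" using dj[OF R] by linarith
          also have "\<beta> * M + \<beta> * M = 2 * \<beta> * M" by simp
          finally show ?thesis .
        qed
        have "ennreal (measure mu Q powr (1/p) * \<bar>mean mu Q f - mean mu R f\<bar>) / Kcoef mu n Q R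
            \<le> ennreal (measure mu Q powr (1/p) * \<bar>mean mu Q f - mean mu R f\<bar>)"
          by (rule ennreal_div_ge1) (simp add: Kcoef_def)
        also have "\<dots> \<le> ennreal (2 * \<beta> * M)" using x by (rule ennreal_leI)
        finally show "(case QR of (Q, R) \<Rightarrow> ennreal (measure mu Q powr (1/p) * \<bar>mean mu Q f - mean mu R f\<bar>) / Kcoef mu n Q R)
            \<le> ennreal (2 * \<beta> * M)" using QRe by simp
      qed
      have "normC mu n p q f \<le> ennreal (2 * (M + \<beta> * M)) + ennreal (2 * \<beta> * M)"
        unfolding normC_def using T1 T2 by (rule add_mono)
      also have "\<dots> = ennreal (Cl * M)"
        using real \<beta> by (simp add: Cl_def ennreal_plus[symmetric] algebra_simps del: ennreal_plus)
      also have "\<dots> = ennreal Cl * normM mu p q f" using real Cl by (simp add: ennreal_mult)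
      finally show ?thesis .
    qed
    show "normM mu p q f \<le> ennreal C * normC mu n p q f"
      using up C by (meson ennreal_leI mult_right_mono order_trans zero_le)
    have "ennreal (1 / C) * normC mu n p q f \<le> ennreal (1 / C) * (ennreal C * normM mu p q f)"
      using low C by (meson ennreal_leI mult_left_mono mult_right_mono order_trans zero_le)
    also have "\<dots> = normM mu p q f"
      using C by (simp add: mult.assoc[symmetric] ennreal_mult[symmetric])
    finally show "ennreal (1 / C) * normC mu n p q f \<le> normM mu p q f" .
  qed
qed

end

theorem theorem2:
  fixes mu :: "'a::euclidean_space measure" and C0 n p q :: real
  assumes "radon_measure mu"
    and "C0 > 0" and "0 < n" and "n \<le> real DIM('a)"
    and "growth mu C0 n"
    and "1 \<le> q" and "q \<le> p"
  shows "\<exists>C>0. \<forall>f. in_C mu n p q f \<and> mean_lim_zero mu f \<longrightarrow>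
            ennreal (1 / C) * normC mu n p q f \<le> normM mu p q f \<and>
            normM mu p q f \<le> ennreal C * normC mu n p q f"
proof -
  interpret setting mu C0 n using assms(1-5) by unfold_locales
  show ?thesis using main[OF assms(6,7)] .
qed

end
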